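(* Let $\Sigma$ be any $(\mathbf d,\mathbf z)$-cluster pattern in a semifield $\mathbb P$ with initial seed $(\mathbf x,\mathbf y,B)$ (here $\mathbf y\in\mathbb P^n$ and $\mathbf z$ have values in $\mathbb P$), with exchange matrices $B_t=(b^t_{ij})$ and $y$-variables $y^t_i$. Let $C^t=(c^t_{ij})$ and $F^t_j$ be the $C$-matrices and $F$-polynomials of the $(\mathbf d,\mathbf z)$-cluster pattern with principal coefficients having the same initial exchange matrix $B$ and the same $\mathbf d$. Then for all $t$ and $i$, $$y^t_i=\prod_{j=1}^ny_j^{c^t_{ji}}\prod_{j=1}^nF^t_j|_{\mathbb P}(\mathbf y,\mathbf z)^{b^t_{ji}}.$$ Moreover, the $Y$-functions satisfy $Y^t_i(\mathbf y,\mathbf z)=\prod_jy_j^{c^t_{ji}}\prod_jF^t_j(\mathbf y,\mathbf z)^{b^t_{ji}}$ as rational functions in the formal variables.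
   Context: All matrices integer and $[a]_+=\max(a,0)$. A semifield $\mathbb P$ is an abelian multiplicative group with a commutative associative $\oplus$ over which multiplication distributes; $\mathbb Z\mathbb P$ its group ring, $\mathbb Q\mathbb P$ its fraction field, $\mathcal F=\mathbb Q\mathbb P(w_1,\dots,w_n)$. A seed in $\mathbb P$ is $(\mathbf x,\mathbf y,B)$ with $B=(b_{ij})$ skew-symmetrizable $n\times n$, $\mathbf x\in\mathcal F^n$, $\mathbf y\in\mathbb P^n$. Mutation data: positive integers $\mathbf d$ and $z_{i,s}\in\mathbb P$ ($1\le s\le d_i-1$) with $z_{i,s}=z_{i,d_i-s}$, $z_{i,0}=z_{i,d_i}=1$. The $(\mathbf d,\mathbf z)$-mutation $\mu_k(\mathbf{x},\mathbf{y},B)=(\mathbf{x}',\mathbf{y}',B')$: $b'_{ij}=-b_{ij}$ if $i=k$ or $j=k$, else $b'_{ij}=b_{ij}+d_k([-b_{ik}]_+b_{kj}+b_{ik}[b_{kj}]_+)$; $y'_k=y_k^{-1}$, $y'_i=y_i(y_k^{[\varepsilon b_{ki}]_+})^{d_k}(\bigoplus_{s=0}^{d_k}z_{k,s}y_k^{\varepsilon s})^{-b_{ki}}$ ($i\ne k$); $x'_i=x_i$ ($i\ne k$), $x'_k=x_k^{-1}(\prod_jx_j^{[-\varepsilon b_{jk}]_+})^{d_k}\frac{\sum_{s=0}^{d_k}z_{k,s}\hat y_k^{\varepsilon s}}{\bigoplus_{s=0}^{d_k}z_{k,s}y_k^{\varepsilon s}}$, $\hat y_i=y_i\prod_jx_j^{b_{ji}}$,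 $\varepsilon=\pm1$. $\mathbb T_n$ is the $n$-regular tree with edges labeled $1,\dots,n$, distinct labels at each vertex; a $(\mathbf d,\mathbf z)$-cluster pattern assigns seeds $(\mathbf x_t,\mathbf y_t,B_t)$, $\mathbf y_t=(y^t_i)$, to vertices related by $\mu_k$ along edges labeled $k$, initial seed at a fixed $t_0$. Principal coefficients: for formal variables $y_1,\dots,y_n$, $z_{i,s}$ ($z_{i,s}=z_{i,d_i-s}$), $\mathrm{Trop}(\mathbf y,\mathbf z)$ is the free abelian group they generate with $\oplus$ the componentwise minimum of exponents; the pattern with principal coefficients lives in $\mathrm{Trop}(\mathbf y,\mathbf z)$ with initial seed $(\mathbf x,\mathbf y,B)$ ($\mathbf y$ the generators). Its $y^t_j$ are Laurent monomials $\prod_iy_i^{c^t_{ij}}$ in $\mathbf y$ alone, defining $C^t=(c^t_{ij})$. Its $x^t_i$ are $X$-functions $X^t_i\in\mathbb Z[x_1^{\pm1},\dots,x_n^{\pm1},\mathbf y,\mathbf z]$, and $F^t_i(\mathbf y,\mathbf z)=X^t_i(1,\dots,1,\mathbf y,\mathbf z)$. Each $F^t_i$ is a subtraction-free rational expression in $\mathbf y,\mathbf z$, so it can be evaluated in any semifield: $F^t_i|_{\mathbb P}(\mathbf y,\mathbf z)$ denotes the value in $\mathbb P$ with $+$ replaced by $\oplus$ and the variables replaced by the given elements of $\mathbb P$. $Y^t_i(\mathbf y,\mathbf z)$ (the $Y$-functions) are the $y$-variables of the $(\mathbf d,\mathbf z)$-cluster pattern with initial seed $(\mathbf x,\mathbf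 y,B)$ in the universal semifield $\mathbb Q_{\mathrm{sf}}(\mathbf y,\mathbf z)$ of subtraction-free rational functions in the formal variables. *)

theory Defs
  imports Complex_Main
begin

record 'p semifield_ops =
  sf_carrier :: "'p set"
  sf_mul :: "'p \<Rightarrow> 'p \<Rightarrow> 'p"
  sf_one :: "'p"
  sf_inv :: "'p \<Rightarrow> 'p"
  sf_add :: "'p \<Rightarrow> 'p \<Rightarrow> 'p"

definition semifield :: "('p, 'm) semifield_ops_scheme \<Rightarrow> bool" where
  "semifield P \<longleftrightarrow>
     sf_one P \<in> sf_carrier P \<and>
     (\<forall>a\<in>sf_carrier P. \<forall>b\<in>sf_carrier P. sf_mul P a b \<in> sf_carrier P) \<and>
     (\<forall>a\<in>sf_carrier P. sf_inv P a \<in> sf_carrier P) \<and>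
     (\<forall>a\<in>sf_carrier P. \<forall>b\<in>sf_carrier P. sf_add P a b \<in> sf_carrier P) \<and>
     (\<forall>a\<in>sf_carrier P. \<forall>b\<in>sf_carrier P. \<forall>c\<in>sf_carrier P.
        sf_mul P (sf_mul P a b) c = sf_mul P a (sf_mul P b c)) \<and>
     (\<forall>a\<in>sf_carrier P. \<forall>b\<in>sf_carrier P. sf_mul P a b = sf_mul P b a) \<and>
     (\<forall>a\<in>sf_carrier P. sf_mul P (sf_one P) a = a) \<and>
     (\<forall>a\<in>sf_carrier P. sf_mul P a (sf_inv P a) = sf_one P) \<and>
     (\<forall>a\<in>sf_carrier P. \<forall>b\<in>sf_carrier P. \<forall>c\<in>sf_carrier P.
        sf_add P (sf_add P a b) c = sf_add P a (sf_add P b c)) \<and>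
     (\<forall>a\<in>sf_carrier P. \<forall>b\<in>sf_carrier P. sf_add P a b = sf_add P b a) \<and>
     (\<forall>a\<in>sf_carrier P. \<forall>b\<in>sf_carrier P. \<forall>c\<in>sf_carrier P.
        sf_mul P a (sf_add P b c) = sf_add P (sf_mul P a b) (sf_mul P a c))"

definition sf_pow :: "('p, 'm) semifield_ops_scheme \<Rightarrow> 'p \<Rightarrow> int \<Rightarrow> 'p" where
  "sf_pow P a k = (if 0 \<le> k then (sf_mul P a ^^ nat k) (sf_one P)
                   else (sf_mul P (sf_inv P a) ^^ nat (- k)) (sf_one P))"

definition sf_prod :: "('p, 'm) semifield_ops_scheme \<Rightarrow> (nat \<Rightarrow> 'p) \<Rightarrow> nat \<Rightarrow> 'p" where
  "sf_prod P f n = foldr (\<lambda>j acc. sf_mul P (f j) acc) [0..<n] (sf_one P)"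

definition sf_sum :: "('p, 'm) semifield_ops_scheme \<Rightarrow> (nat \<Rightarrow> 'p) \<Rightarrow> nat \<Rightarrow> 'p" where
  "sf_sum P f d = foldr (\<lambda>s acc. sf_add P (f s) acc) [1..<Suc d] (f 0)"

definition pos :: "int \<Rightarrow> int" where "pos a = max a 0"

definition skew_symmetrizable :: "nat \<Rightarrow> (nat \<Rightarrow> nat \<Rightarrow> int) \<Rightarrow> bool" where
  "skew_symmetrizable n B \<longleftrightarrow>
     (\<exists>D :: nat \<Rightarrow> int. (\<forall>i<n. D i > 0) \<and>
        (\<forall>i<n. \<forall>j<n. D i * B i j = - (D j * B j i)))"

definition mutB :: "(nat \<Rightarrow> nat) \<Rightarrow> nat \<Rightarrow> (nat \<Rightarrow> nat \<Rightarrow> int) \<Rightarrow> (nat \<Rightarrow> nat \<Rightarrow> int)" where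
  "mutB d k B = (\<lambda>i j. if i = k \<or> j = k then - B i j
      else B i j + int (d k) * (pos (- B i k) * B k j + B i k * pos (B k j)))"

text \<open>(d,z)-mutation of y-variables, with the sign choice \<open>\<epsilon> = 1\<close>.\<close>
definition mutY :: "('p, 'm) semifield_ops_scheme \<Rightarrow> (nat \<Rightarrow> nat) \<Rightarrow> (nat \<Rightarrow> nat \<Rightarrow> 'p)
    \<Rightarrow> nat \<Rightarrow> (nat \<Rightarrow> nat \<Rightarrow> int) \<Rightarrow> (nat \<Rightarrow> 'p) \<Rightarrow> (nat \<Rightarrow> 'p)" where
  "mutY P d z k B y = (\<lambda>i. if i = k then sf_inv P (y k)
      else sf_mul P (y i)
        (sf_mul P (sf_pow P (y k) (int (d k) * pos (B k i)))
          (sf_pow P (sf_sum P (\<lambda>s. sf_mul P (z k s) (sf_pow P (y k) (int s))) (d k)) (- B k i))))"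

text \<open>Vertices of the n-regular tree \<open>\<T>\<^sub>n\<close>: reduced words in the labels
  (the unique path from the base vertex \<open>t\<^sub>0\<close>); labels are \<open>0..n-1\<close>.\<close>
definition tree_vertex :: "nat \<Rightarrow> nat list \<Rightarrow> bool" where
  "tree_vertex n ks \<longleftrightarrow> set ks \<subseteq> {..<n} \<and> (\<forall>i. Suc i < length ks \<longrightarrow> ks ! i \<noteq> ks ! Suc i)"

text \<open>The (B, y)-part of a (d,z)-cluster pattern: the seed at the vertex
  reached from \<open>t\<^sub>0\<close> along the path with labels \<open>k\<^sub>1, k\<^sub>2, ...\<close>.\<close>
fun ypat :: "('p, 'm) semifield_ops_scheme \<Rightarrow> (nat \<Rightarrow> nat) \<Rightarrow> (nat \<Rightarrow> nat \<Rightarrow> 'p)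
    \<Rightarrow> (nat \<Rightarrow> nat \<Rightarrow> int) \<Rightarrow> (nat \<Rightarrow> 'p) \<Rightarrow> nat list \<Rightarrow> (nat \<Rightarrow> nat \<Rightarrow> int) \<times> (nat \<Rightarrow> 'p)" where
  "ypat P d z B y [] = (B, y)"
| "ypat P d z B y (k # ks) = ypat P d z (mutB d k B) (mutY P d z k B y) ks"

datatype var = VX nat | VY nat | VZ nat nat

text \<open>The identification z_{i,s} = z_{i,d_i-s}: representative index.\<close>
definition zv :: "(nat \<Rightarrow> nat) \<Rightarrow> nat \<Rightarrow> nat \<Rightarrow> var" where
  "zv d i s = VZ i (min s (d i - s))"

definition yzvars :: "nat \<Rightarrow> (nat \<Rightarrow> nat) \<Rightarrow> var set" where
  "yzvars n d = {VY j | j. j < n} \<union> {VZ i s | i s. i < n \<and> 1 \<le> s \<and> s < d i}"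

text \<open>Trop(y,z): Laurent monomials as exponent vectors; \<oplus> = componentwise min.\<close>
definition trop_sf :: "(var \<Rightarrow> int) semifield_ops" where
  "trop_sf = \<lparr> sf_carrier = UNIV, sf_mul = (\<lambda>a b v. a v + b v), sf_one = (\<lambda>v. 0),
              sf_inv = (\<lambda>a v. - a v), sf_add = (\<lambda>a b v. min (a v) (b v)) \<rparr>"

definition zt :: "(nat \<Rightarrow> nat) \<Rightarrow> nat \<Rightarrow> nat \<Rightarrow> var \<Rightarrow> int" where
  "zt d i s = (\<lambda>v. if 1 \<le> s \<and> s < d i \<and> v = zv d i s then 1 else 0)"

definition yt0 :: "nat \<Rightarrow> var \<Rightarrow> int" where
  "yt0 j = (\<lambda>v. if v = VY j then 1 else 0)"

text \<open>Elements of the ambient field \<open>\<bbbQ>Trop(y,z)(x)\<close> are represented as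
  functions on points with positive real coordinates (evaluation is injective).\<close>
definition meval :: "nat \<Rightarrow> (nat \<Rightarrow> nat) \<Rightarrow> (var \<Rightarrow> int) \<Rightarrow> (var \<Rightarrow> real) \<Rightarrow> real" where
  "meval n d m p = (\<Prod>v\<in>yzvars n d. p v powi m v)"

definition mutX :: "nat \<Rightarrow> (nat \<Rightarrow> nat) \<Rightarrow> nat \<Rightarrow> (nat \<Rightarrow> nat \<Rightarrow> int) \<Rightarrow> (nat \<Rightarrow> var \<Rightarrow> int)
    \<Rightarrow> (nat \<Rightarrow> (var \<Rightarrow> real) \<Rightarrow> real) \<Rightarrow> (nat \<Rightarrow> (var \<Rightarrow> real) \<Rightarrow> real)" where
  "mutX n d k B y X = (\<lambda>i. if i \<noteq> k then X i else (\<lambda>p.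
      let yhat = meval n d (y k) p * (\<Prod>j<n. X j p powi B j k) in
      inverse (X k p) * (\<Prod>j<n. X j p ^ nat (pos (- B j k))) ^ d k
      * (\<Sum>s=0..d k. meval n d (zt d k s) p * yhat ^ s)
      / meval n d (sf_sum trop_sf (\<lambda>s. sf_mul trop_sf (zt d k s) (sf_pow trop_sf (y k) (int s))) (d k)) p))"

fun ppat :: "nat \<Rightarrow> (nat \<Rightarrow> nat) \<Rightarrow> (nat \<Rightarrow> nat \<Rightarrow> int) \<Rightarrow> (nat \<Rightarrow> var \<Rightarrow> int)
    \<Rightarrow> (nat \<Rightarrow> (var \<Rightarrow> real) \<Rightarrow> real) \<Rightarrow> nat list
    \<Rightarrow> (nat \<Rightarrow> nat \<Rightarrow> int) \<times> (nat \<Rightarrow> var \<Rightarrow> int) \<times> (nat \<Rightarrow> (var \<Rightarrow> real) \<Rightarrow> real)" where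
  "ppat n d B y X [] = (B, y, X)"
| "ppat n d B y X (k # ks) =
     ppat n d (mutB d k B) (mutY trop_sf d (zt d) k B y) (mutX n d k B y X) ks"

definition principal :: "nat \<Rightarrow> (nat \<Rightarrow> nat) \<Rightarrow> (nat \<Rightarrow> nat \<Rightarrow> int) \<Rightarrow> nat list
    \<Rightarrow> (nat \<Rightarrow> nat \<Rightarrow> int) \<times> (nat \<Rightarrow> var \<Rightarrow> int) \<times> (nat \<Rightarrow> (var \<Rightarrow> real) \<Rightarrow> real)" where
  "principal n d B ks = ppat n d B yt0 (\<lambda>j p. p (VX j)) ks"

text \<open>C-matrix: \<open>c\<^sup>t\<^sub>i\<^sub>j\<close> is the exponent of \<open>y\<^sub>i\<close> in \<open>y\<^sup>t\<^sub>j\<close>.\<close>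
definition Cmat :: "nat \<Rightarrow> (nat \<Rightarrow> nat) \<Rightarrow> (nat \<Rightarrow> nat \<Rightarrow> int) \<Rightarrow> nat list \<Rightarrow> nat \<Rightarrow> nat \<Rightarrow> int" where
  "Cmat n d B ks i j = fst (snd (principal n d B ks)) j (VY i)"

text \<open>F-polynomial: X-function with all x-variables set to 1.\<close>
definition Fpoly :: "nat \<Rightarrow> (nat \<Rightarrow> nat) \<Rightarrow> (nat \<Rightarrow> nat \<Rightarrow> int) \<Rightarrow> nat list \<Rightarrow> nat \<Rightarrow> (var \<Rightarrow> real) \<Rightarrow> real" where
  "Fpoly n d B ks j = (\<lambda>p. snd (snd (principal n d B ks)) j
                          (\<lambda>v. case v of VX _ \<Rightarrow> 1 | _ \<Rightarrow> p v))"

datatype 'v sfexp = SVar 'v | SAdd "'v sfexp" "'v sfexp" | SMul "'v sfexp" "'v sfexp"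
  | SDiv "'v sfexp" "'v sfexp"

fun sfvars :: "'v sfexp \<Rightarrow> 'v set" where
  "sfvars (SVar v) = {v}"
| "sfvars (SAdd a b) = sfvars a \<union> sfvars b"
| "sfvars (SMul a b) = sfvars a \<union> sfvars b"
| "sfvars (SDiv a b) = sfvars a \<union> sfvars b"

fun sfeval_real :: "'v sfexp \<Rightarrow> ('v \<Rightarrow> real) \<Rightarrow> real" where
  "sfeval_real (SVar v) p = p v"
| "sfeval_real (SAdd a b) p = sfeval_real a p + sfeval_real b p"
| "sfeval_real (SMul a b) p = sfeval_real a p * sfeval_real b p"
| "sfeval_real (SDiv a b) p = sfeval_real a p / sfeval_real b p"

fun sfeval :: "('p, 'm) semifield_ops_scheme \<Rightarrow> 'v sfexp \<Rightarrow> ('v \<Rightarrow> 'p) \<Rightarrow> 'p" where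
  "sfeval P (SVar v) a = a v"
| "sfeval P (SAdd e f) a = sf_add P (sfeval P e a) (sfeval P f a)"
| "sfeval P (SMul e f) a = sf_mul P (sfeval P e a) (sfeval P f a)"
| "sfeval P (SDiv e f) a = sf_mul P (sfeval P e a) (sf_inv P (sfeval P f a))"

definition positive_point :: "(var \<Rightarrow> real) \<Rightarrow> bool" where
  "positive_point p \<longleftrightarrow> (\<forall>v. 0 < p v)"

text \<open>\<open>F|\<^sub>P(a)\<close>: evaluate in P a subtraction-free rational expression (in the
  variables y, z) representing the rational function F.  By the universality of
  the semifield of subtraction-free rational functions, the value does not
  depend on the chosen expression.\<close>
definition eval_in :: "('p, 'm) semifield_ops_scheme \<Rightarrow> nat \<Rightarrow> (nat \<Rightarrow> nat)
    \<Rightarrow> ((var \<Rightarrow> real) \<Rightarrow> real) \<Rightarrow> (var \<Rightarrow> 'p) \<Rightarrow> 'p" where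
  "eval_in P n d F a = sfeval P (SOME e. sfvars e \<subseteq> yzvars n d \<and>
       (\<forall>p. positive_point p \<longrightarrow> sfeval_real e p = F p)) a"

section \<open>The universal semifield, modelled by pointwise operations on functions
  of positive real points\<close>

definition fun_sf :: "((var \<Rightarrow> real) \<Rightarrow> real) semifield_ops" where
  "fun_sf = \<lparr> sf_carrier = UNIV, sf_mul = (\<lambda>f g p. f p * g p), sf_one = (\<lambda>p. 1),
              sf_inv = (\<lambda>f p. inverse (f p)), sf_add = (\<lambda>f g p. f p + g p) \<rparr>"

text \<open>Y-functions: y-variables of the pattern in \<open>\<bbbQ>\<^sub>s\<^sub>f(y,z)\<close>.\<close>
definition Yfun :: "nat \<Rightarrow> (nat \<Rightarrow> nat) \<Rightarrow> (nat \<Rightarrow> nat \<Rightarrow> int) \<Rightarrow> nat list \<Rightarrow> nat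
    \<Rightarrow> (var \<Rightarrow> real) \<Rightarrow> real" where
  "Yfun n d B ks i = snd (ypat fun_sf d
      (\<lambda>k s p. if s = 0 \<or> s = d k then 1 else p (zv d k s)) B (\<lambda>j p. p (VY j)) ks) i"

end

theory Submission
  imports Defs "HOL-Computational_Algebra.Polynomial"
begin

locale sfl = fixes P :: "('p,'m) semifield_ops_scheme" assumes sf: "semifield P"
begin
lemma one_c[simp]: "sf_one P \<in> sf_carrier P" using sf unfolding semifield_def by blast
lemma mul_c[simp]: "a \<in> sf_carrier P \<Longrightarrow> b \<in> sf_carrier P \<Longrightarrow> sf_mul P a b \<in> sf_carrier P" using sf unfolding semifield_def by blast
lemma inv_c[simp]: "a \<in> sf_carrier P \<Longrightarrow> sf_inv P a \<in> sf_carrier P" using sf unfolding semifield_def by blast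
lemma add_c[simp]: "a \<in> sf_carrier P \<Longrightarrow> b \<in> sf_carrier P \<Longrightarrow> sf_add P a b \<in> sf_carrier P" using sf unfolding semifield_def by blast
lemma m_assoc: "a \<in> sf_carrier P \<Longrightarrow> b \<in> sf_carrier P \<Longrightarrow> c \<in> sf_carrier P \<Longrightarrow> sf_mul P (sf_mul P a b) c = sf_mul P a (sf_mul P b c)" using sf unfolding semifield_def by blast
lemma m_comm: "a \<in> sf_carrier P \<Longrightarrow> b \<in> sf_carrier P \<Longrightarrow> sf_mul P a b = sf_mul P b a" using sf unfolding semifield_def by blast
lemma m_lid[simp]: "a \<in> sf_carrier P \<Longrightarrow> sf_mul P (sf_one P) a = a" using sf unfolding semifield_def by blast
lemma m_rid[simp]: "a \<in> sf_carrier P \<Longrightarrow> sf_mul P a (sf_one P) = a" using m_comm m_lid by simp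
lemma m_rinv[simp]: "a \<in> sf_carrier P \<Longrightarrow> sf_mul P a (sf_inv P a) = sf_one P" using sf unfolding semifield_def by blast
lemma m_linv[simp]: "a \<in> sf_carrier P \<Longrightarrow> sf_mul P (sf_inv P a) a = sf_one P" using m_comm m_rinv by simp
lemma a_assoc: "a \<in> sf_carrier P \<Longrightarrow> b \<in> sf_carrier P \<Longrightarrow> c \<in> sf_carrier P \<Longrightarrow> sf_add P (sf_add P a b) c = sf_add P a (sf_add P b c)" using sf unfolding semifield_def by blast
lemma a_comm: "a \<in> sf_carrier P \<Longrightarrow> b \<in> sf_carrier P \<Longrightarrow> sf_add P a b = sf_add P b a" using sf unfolding semifield_def by blast
lemma distl: "a \<in> sf_carrier P \<Longrightarrow> b \<in> sf_carrier P \<Longrightarrow> c \<in> sf_carrier P \<Longrightarrow> sf_mul P a (sf_add P b c) = sf_add P (sf_mul P a b) (sf_mul P a c)" using sf unfolding semifield_def by blast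
lemma distr: "a \<in> sf_carrier P \<Longrightarrow> b \<in> sf_carrier P \<Longrightarrow> c \<in> sf_carrier P \<Longrightarrow> sf_mul P (sf_add P b c) a = sf_add P (sf_mul P b a) (sf_mul P c a)"
  using distl m_comm by simp
lemma m_lcomm: "a \<in> sf_carrier P \<Longrightarrow> b \<in> sf_carrier P \<Longrightarrow> c \<in> sf_carrier P \<Longrightarrow> sf_mul P a (sf_mul P b c) = sf_mul P b (sf_mul P a c)"
  by (metis m_assoc m_comm)
lemma a_lcomm: "a \<in> sf_carrier P \<Longrightarrow> b \<in> sf_carrier P \<Longrightarrow> c \<in> sf_carrier P \<Longrightarrow> sf_add P a (sf_add P b c) = sf_add P b (sf_add P a c)"
  by (metis a_assoc a_comm)
lemma cancel_eq:
  assumes c: "a \<in> sf_carrier P" "b \<in> sf_carrier P" "c \<in> sf_carrier P" "e \<in> sf_carrier P"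
    and eq: "sf_mul P a e = sf_mul P c b"
  shows "sf_mul P a (sf_inv P b) = sf_mul P c (sf_inv P e)"
proof -
  have "sf_mul P a (sf_inv P b) = sf_mul P (sf_mul P a e) (sf_mul P (sf_inv P e) (sf_inv P b))"
  proof -
    have 1: "sf_mul P e (sf_mul P (sf_inv P e) (sf_inv P b)) = sf_inv P b" using c by (simp add: m_assoc[symmetric])
    show ?thesis using c by (simp add: m_assoc 1)
  qed
  also have "\<dots> = sf_mul P (sf_mul P c b) (sf_mul P (sf_inv P e) (sf_inv P b))" using eq by simp
  also have "\<dots> = sf_mul P c (sf_inv P e)" using c by (simp add: m_assoc m_lcomm[of b])
  finally show ?thesis .
qed
end

definition shom :: "('a,'m1) semifield_ops_scheme \<Rightarrow> ('b,'m2) semifield_ops_scheme \<Rightarrow> ('a\<Rightarrow>'b) \<Rightarrow> 'a set \<Rightarrow> bool" where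
 "shom S T h G \<longleftrightarrow> sf_one S \<in> G \<and> h (sf_one S) = sf_one T \<and>
   (\<forall>x\<in>G. \<forall>y\<in>G. sf_mul S x y \<in> G \<and> sf_add S x y \<in> G \<and> h (sf_mul S x y) = sf_mul T (h x) (h y)
      \<and> h (sf_add S x y) = sf_add T (h x) (h y)) \<and>
   (\<forall>x\<in>G. sf_inv S x \<in> G \<and> h (sf_inv S x) = sf_inv T (h x))"

lemma shomD:
  assumes "shom S T h G"
  shows "sf_one S \<in> G" "h (sf_one S) = sf_one T"
    "x\<in>G \<Longrightarrow> y\<in>G \<Longrightarrow> sf_mul S x y \<in> G" "x\<in>G \<Longrightarrow> y\<in>G \<Longrightarrow> sf_add S x y \<in> G"
    "x\<in>G \<Longrightarrow> y\<in>G \<Longrightarrow> h (sf_mul S x y) = sf_mul T (h x) (h y)"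
    "x\<in>G \<Longrightarrow> y\<in>G \<Longrightarrow> h (sf_add S x y) = sf_add T (h x) (h y)"
    "x\<in>G \<Longrightarrow> sf_inv S x \<in> G" "x\<in>G \<Longrightarrow> h (sf_inv S x) = sf_inv T (h x)"
  using assms unfolding shom_def by blast+

lemma shom_funpow:
  assumes "shom S T h G" "x \<in> G" "a \<in> G"
  shows "(sf_mul S x ^^ m) a \<in> G \<and> h ((sf_mul S x ^^ m) a) = (sf_mul T (h x) ^^ m) (h a)"
  by (induction m) (auto simp: shomD[OF assms(1)] assms)

lemma shom_pow:
  assumes "shom S T h G" "x \<in> G"
  shows "sf_pow S x k \<in> G \<and> h (sf_pow S x k) = sf_pow T (h x) k"
  using shom_funpow[OF assms(1) assms(2) shomD(1)[OF assms(1)]]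
    shom_funpow[OF assms(1) shomD(7)[OF assms] shomD(1)[OF assms(1)]]
  by (auto simp: sf_pow_def shomD[OF assms(1)] assms)

lemma shom_foldr_mul:
  assumes "shom S T h G" "\<forall>j\<in>set xs. f j \<in> G" "a \<in> G"
  shows "foldr (\<lambda>j acc. sf_mul S (f j) acc) xs a \<in> G \<and>
     h (foldr (\<lambda>j acc. sf_mul S (f j) acc) xs a) = foldr (\<lambda>j acc. sf_mul T (h (f j)) acc) xs (h a)"
  using assms(2) by (induction xs) (auto simp: shomD[OF assms(1)] assms)

lemma shom_foldr_add:
  assumes "shom S T h G" "\<forall>j\<in>set xs. f j \<in> G" "a \<in> G"
  shows "foldr (\<lambda>j acc. sf_add S (f j) acc) xs a \<in> G \<and>
     h (foldr (\<lambda>j acc. sf_add S (f j) acc) xs a) = foldr (\<lambda>j acc. sf_add T (h (f j)) acc) xs (h a)"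
  using assms(2) by (induction xs) (auto simp: shomD[OF assms(1)] assms)

lemma shom_prod:
  assumes "shom S T h G" "\<forall>j<n. f j \<in> G"
  shows "sf_prod S f n \<in> G \<and> h (sf_prod S f n) = sf_prod T (\<lambda>j. h (f j)) n"
  using shom_foldr_mul[OF assms(1), of "[0..<n]" f "sf_one S"] assms
  by (auto simp: sf_prod_def shomD[OF assms(1)])

lemma shom_sum:
  assumes "shom S T h G" "\<forall>j\<le>dd. f j \<in> G"
  shows "sf_sum S f dd \<in> G \<and> h (sf_sum S f dd) = sf_sum T (\<lambda>j. h (f j)) dd"
  using shom_foldr_add[OF assms(1), of "[1..<Suc dd]" f "f 0"] assms
  by (auto simp: sf_sum_def)

lemma sf_sum_cong: "(\<And>j. j \<le> dd \<Longrightarrow> f j = g j) \<Longrightarrow> sf_sum T f dd = sf_sum T g dd"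
  unfolding sf_sum_def by (rule foldr_cong) auto
lemma sf_prod_cong: "(\<And>j. j < n \<Longrightarrow> f j = g j) \<Longrightarrow> sf_prod T f n = sf_prod T g n"
  unfolding sf_prod_def by (rule foldr_cong) auto

lemma shom_mutY:
  assumes h: "shom S T h G" and "k < n" "i < n"
    and z: "\<forall>s\<le>d k. z k s \<in> G \<and> h (z k s) = z' k s"
    and y: "\<forall>i<n. y i \<in> G \<and> h (y i) = y' i"
  shows "mutY S d z k B y i \<in> G \<and> h (mutY S d z k B y i) = mutY T d z' k B y' i"
proof -
  have yk: "y k \<in> G" "h (y k) = y' k" using y assms by auto
  have yi: "y i \<in> G" "h (y i) = y' i" using y assms by auto
  have f: "\<forall>s\<le>d k. sf_mul S (z k s) (sf_pow S (y k) (int s)) \<in> G \<and>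
      h (sf_mul S (z k s) (sf_pow S (y k) (int s))) = sf_mul T (z' k s) (sf_pow T (y' k) (int s))"
    using z shom_pow[OF h yk(1)] yk by (auto simp: shomD[OF h])
  have sm: "sf_sum S (\<lambda>s. sf_mul S (z k s) (sf_pow S (y k) (int s))) (d k) \<in> G \<and>
     h (sf_sum S (\<lambda>s. sf_mul S (z k s) (sf_pow S (y k) (int s))) (d k)) =
     sf_sum T (\<lambda>s. sf_mul T (z' k s) (sf_pow T (y' k) (int s))) (d k)"
    using shom_sum[OF h, of "d k" "\<lambda>s. sf_mul S (z k s) (sf_pow S (y k) (int s))"] f
      sf_sum_cong[of "d k" "\<lambda>j. h (sf_mul S (z k j) (sf_pow S (y k) (int j)))" "\<lambda>s. sf_mul T (z' k s) (sf_pow T (y' k) (int s))" T] by auto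
  show ?thesis
    using sm shom_pow[OF h yk(1)] shom_pow[OF h sm[THEN conjunct1]] yi yk
    by (auto simp: mutY_def shomD[OF h])
qed

lemma shom_ypat:
  assumes h: "shom S T h G"
  shows "set ks \<subseteq> {..<n} \<Longrightarrow> (\<forall>k<n. \<forall>s\<le>d k. z k s \<in> G \<and> h (z k s) = z' k s) \<Longrightarrow>
    (\<forall>i<n. y i \<in> G \<and> h (y i) = y' i) \<Longrightarrow>
    (\<forall>i<n. snd (ypat S d z B y ks) i \<in> G \<and> h (snd (ypat S d z B y ks) i) = snd (ypat T d z' B y' ks) i)"
proof (induction ks arbitrary: B y y')
  case Nil then show ?case by simp
next
  case (Cons k ks)
  have "\<forall>i<n. mutY S d z k B y i \<in> G \<and> h (mutY S d z k B y i) = mutY T d z' k B y' i"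
    using shom_mutY[OF h, of k n _ d z z' y y' B] Cons.prems by auto
  then show ?case using Cons.IH[of "mutY S d z k B y" "mutY T d z' k B y'" "mutB d k B"] Cons.prems by simp
qed

lemma fst_ypat: "fst (ypat S d z B y ks) = fold (mutB d) ks B"
  by (induction ks arbitrary: B y) auto


lemma univ_zero:
  fixes g :: "nat \<Rightarrow> real"
  assumes K: "finite K" and z: "\<forall>t>0. (\<Sum>k\<in>K. g k * t ^ k) = 0"
  shows "\<forall>k\<in>K. g k = 0"
proof -
  define q where "q = (\<Sum>k\<in>K. monom (g k) k)"
  have pq: "poly q t = (\<Sum>k\<in>K. g k * t ^ k)" for t
    by (simp add: q_def poly_sum poly_monom)
  have "q = 0"
  proof (rule ccontr)
    assume "q \<noteq> 0"
    then have "finite {t. poly q t = 0}" by (rule poly_roots_finite)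
    moreover have "{t::real. t > 0} \<subseteq> {t. poly q t = 0}" using z pq by auto
    moreover have "infinite {t::real. t > 0}"
    proof
      assume "finite {t::real. t > 0}"
      then have "finite {0<..(1::real)}" by (rule finite_subset[rotated]) auto
      then show False using infinite_Ioc[of "0::real" 1] by simp
    qed
    ultimately show False using finite_subset by blast
  qed
  show ?thesis
  proof
    fix k assume k: "k \<in> K"
    have "coeff q k = (\<Sum>j\<in>K. coeff (monom (g j) j) k)" by (simp add: q_def coeff_sum)
    also have "\<dots> = (\<Sum>j\<in>K. if j = k then g j else 0)" by (simp add: coeff_monom)
    also have "\<dots> = g k" using K k by simp
    finally show "g k = 0" using \<open>q = 0\<close> by simp
  qed
qed

definition mon :: "'v set \<Rightarrow> ('v \<Rightarrow> real) \<Rightarrow> ('v \<Rightarrow> nat) \<Rightarrow> real" where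
  "mon V p m = (\<Prod>v\<in>V. p v ^ m v)"

lemma mon_pos: "(\<forall>v. 0 < p v) \<Longrightarrow> 0 < mon V p m"
  unfolding mon_def by (rule prod_pos) auto

lemma coeff_zero:
  assumes "finite V"
  shows "finite S \<Longrightarrow> (\<forall>m\<in>S. \<forall>w. w\<notin>V \<longrightarrow> m w = 0) \<Longrightarrow>
    (\<forall>p. (\<forall>v. 0 < p v) \<longrightarrow> (\<Sum>m\<in>S. c m * mon V p m) = 0) \<Longrightarrow> \<forall>m\<in>S. c m = 0"
  using assms
proof (induction V arbitrary: S c rule: finite_induct)
  case empty
  have S: "S \<subseteq> {\<lambda>_. 0}" using empty.prems(2) by auto
  have "(\<Sum>m\<in>S. c m) = 0" using empty.prems(3)[rule_format, of "\<lambda>_. 1"] by (simp add: mon_def)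
  show ?case
  proof
    fix m assume m: "m \<in> S"
    then have "S = {m}" using S by auto
    then show "c m = 0" using \<open>(\<Sum>m\<in>S. c m) = 0\<close> by simp
  qed
next
  case (insert v V)
  note fS = insert.prems(1) and supp = insert.prems(2) and z = insert.prems(3)
  define K where "K = (\<lambda>m. m v) ` S"
  have fK: "finite K" using fS by (simp add: K_def)
  define g where "g k p = (\<Sum>m\<in>{m\<in>S. m v = k}. c m * mon V p m)" for k p
  have monI: "mon (insert v V) p m = p v ^ m v * mon V p m" for p m
    using insert.hyps by (simp add: mon_def)
  have splitS: "(\<Sum>m\<in>S. c m * mon (insert v V) p m) = (\<Sum>k\<in>K. g k p * p v ^ k)" for p
  proof -
    have "(\<Sum>m\<in>S. c m * mon (insert v V) p m) = (\<Sum>k\<in>K. \<Sum>m\<in>{m\<in>S. m v = k}. c m * mon (insert v V) p m)"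
      unfolding K_def using fS by (rule sum.image_gen)
    also have "\<dots> = (\<Sum>k\<in>K. g k p * p v ^ k)"
      unfolding g_def sum_distrib_right
      by (rule sum.cong[OF refl], rule sum.cong[OF refl]) (auto simp: monI)
    finally show ?thesis .
  qed
  have gv: "g k (p(v:=t)) = g k p" for k p t
  proof -
    have "mon V (p(v:=t)) m = mon V p m" for m
      unfolding mon_def using insert.hyps by (intro prod.cong) auto
    then show ?thesis by (simp add: g_def)
  qed
  have g0: "g k p = 0" if "k \<in> K" "\<forall>v. 0 < p v" for k p
  proof -
    have "\<forall>t>0. (\<Sum>k\<in>K. g k p * t ^ k) = 0"
    proof (intro allI impI)
      fix t :: real assume t: "t > 0"
      have "\<forall>w. 0 < (p(v:=t)) w" using that t by auto
      then have "(\<Sum>m\<in>S. c m * mon (insert v V) (p(v:=t)) m) = 0" using z by blast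
      then have "(\<Sum>k\<in>K. g k (p(v:=t)) * (p(v:=t)) v ^ k) = 0" by (simp only: splitS)
      then show "(\<Sum>k\<in>K. g k p * t ^ k) = 0" by (simp add: gv)
    qed
    then show ?thesis using univ_zero[OF fK, of "\<lambda>k. g k p"] that(1) by blast
  qed
  show ?case
  proof
    fix m0 assume m0: "m0 \<in> S"
    define k where "k = m0 v"
    have kK: "k \<in> K" using m0 by (auto simp: K_def k_def)
    define Sk where "Sk = {m\<in>S. m v = k}"
    define S' where "S' = (\<lambda>m. m(v:=0)) ` Sk"
    define c' where "c' m' = c (m'(v:=k))" for m'
    have inj: "inj_on (\<lambda>m. m(v:=0)) Sk"
    proof (rule inj_onI)
      fix x y assume x: "x \<in> Sk" and y: "y \<in> Sk" and e: "x(v:=0) = y(v:=0)"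
      show "x = y"
      proof
        fix w show "x w = y w"
        proof (cases "w = v")
          case True then show ?thesis using x y by (simp add: Sk_def)
        next
          case False then show ?thesis using fun_cong[OF e, of w] by simp
        qed
      qed
    qed
    have bk: "m(v:=k) = m" if "m \<in> Sk" for m using that by (auto simp: Sk_def)
    have monV: "mon V p (m(v:=0)) = mon V p m" for p m
      unfolding mon_def using insert.hyps by (intro prod.cong) auto
    have "\<forall>m'\<in>S'. c' m' = 0"
    proof (rule insert.IH)
      show "finite S'" using fS by (simp add: S'_def Sk_def)
      show "\<forall>m\<in>S'. \<forall>w. w \<notin> V \<longrightarrow> m w = 0" using supp by (auto simp: S'_def Sk_def)
      show "\<forall>p. (\<forall>v. 0 < p v) \<longrightarrow> (\<Sum>m\<in>S'. c' m * mon V p m) = 0"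
      proof (intro allI impI)
        fix p :: "'a \<Rightarrow> real" assume "\<forall>v. 0 < p v"
        have "(\<Sum>m\<in>S'. c' m * mon V p m) = (\<Sum>m\<in>Sk. c' (m(v:=0)) * mon V p (m(v:=0)))"
          unfolding S'_def by (rule sum.reindex[OF inj, unfolded comp_def])
        also have "\<dots> = g k p" unfolding g_def Sk_def[symmetric]
          by (rule sum.cong[OF refl]) (simp add: c'_def bk monV)
        also have "\<dots> = 0" using g0 kK \<open>\<forall>v. 0 < p v\<close> by blast
        finally show "(\<Sum>m\<in>S'. c' m * mon V p m) = 0" .
      qed
    qed
    moreover have "m0(v:=0) \<in> S'" using m0 by (auto simp: S'_def Sk_def k_def)
    ultimately have "c' (m0(v:=0)) = 0" by blast
    then show "c m0 = 0" by (simp add: c'_def k_def)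
  qed
qed

lemma sl_count:
  fixes f :: "'a \<Rightarrow> real"
  assumes "finite S"
  shows "set xs \<subseteq> S \<Longrightarrow> sum_list (map f xs) = (\<Sum>x\<in>S. real (count_list xs x) * f x)"
proof (induction xs)
  case Nil then show ?case by simp
next
  case (Cons x xs)
  have "sum_list (map f (x#xs)) = f x + (\<Sum>y\<in>S. real (count_list xs y) * f y)" using Cons by simp
  also have "f x = (\<Sum>y\<in>S. (if x = y then 1 else 0) * f y)" using Cons.prems assms
    by (simp add: if_distrib[of "\<lambda>c. c * _"] cong: if_cong)
  finally show ?case by (simp add: sum.distrib[symmetric] algebra_simps) (rule sum.cong, auto simp: algebra_simps)
qed

definition rv :: "'v set \<Rightarrow> ('v \<Rightarrow> real) \<Rightarrow> ('v \<Rightarrow> nat) list \<Rightarrow> real" where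
  "rv V p xs = sum_list (map (mon V p) xs)"

lemma ident:
  assumes "finite V" and supp: "\<forall>m\<in>set xs \<union> set ys. \<forall>w. w\<notin>V \<longrightarrow> m w = 0"
    and eq: "\<forall>p. (\<forall>v. 0 < p v) \<longrightarrow> rv V p xs = rv V p ys"
  shows "mset xs = mset ys"
proof -
  define S where "S = set xs \<union> set ys"
  define c where "c m = real (count_list xs m) - real (count_list ys m)" for m
  have rvS: "rv V p zs = (\<Sum>m\<in>S. real (count_list zs m) * mon V p m)" if "set zs \<subseteq> S" for zs p
    unfolding rv_def by (rule sl_count[OF _ that]) (simp add: S_def)
  have "\<forall>m\<in>S. c m = 0"
  proof (rule coeff_zero[OF assms(1)])
    show "finite S" by (simp add: S_def)
    show "\<forall>m\<in>S. \<forall>w. w \<notin> V \<longrightarrow> m w = 0" using supp by (simp add: S_def)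
    show "\<forall>p. (\<forall>v. 0 < p v) \<longrightarrow> (\<Sum>m\<in>S. c m * mon V p m) = 0"
      using eq rvS[of xs] rvS[of ys] by (auto simp: S_def c_def left_diff_distrib sum_subtractf)
  qed
  then have "count_list xs m = count_list ys m" for m
    by (cases "m \<in> S") (auto simp: c_def S_def count_list_0_iff)
  then show ?thesis by (intro multiset_eqI) (simp add: count_mset)
qed


definition mvar :: "'v \<Rightarrow> 'v \<Rightarrow> nat" where "mvar v w = (if w = v then 1 else 0)"
definition lmul :: "('v\<Rightarrow>nat) list \<Rightarrow> ('v\<Rightarrow>nat) list \<Rightarrow> ('v\<Rightarrow>nat) list" where
  "lmul xs ys = concat (map (\<lambda>x. map (\<lambda>y. (\<lambda>w. x w + y w)) ys) xs)"

fun nf :: "'v sfexp \<Rightarrow> ('v\<Rightarrow>nat) list \<times> ('v\<Rightarrow>nat) list" where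
  "nf (SVar v) = ([mvar v], [\<lambda>_. 0])"
| "nf (SAdd a b) = (lmul (fst (nf a)) (snd (nf b)) @ lmul (fst (nf b)) (snd (nf a)), lmul (snd (nf a)) (snd (nf b)))"
| "nf (SMul a b) = (lmul (fst (nf a)) (fst (nf b)), lmul (snd (nf a)) (snd (nf b)))"
| "nf (SDiv a b) = (lmul (fst (nf a)) (snd (nf b)), lmul (snd (nf a)) (fst (nf b)))"

lemma lmul_Cons: "lmul (x#xs) ys = map (\<lambda>y w. x w + y w) ys @ lmul xs ys" by (simp add: lmul_def)
lemma lmul_Nil[simp]: "lmul [] ys = []" by (simp add: lmul_def)
lemma lmul_ne: "xs \<noteq> [] \<Longrightarrow> ys \<noteq> [] \<Longrightarrow> lmul xs ys \<noteq> []"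
  by (cases xs) (auto simp: lmul_Cons)
lemma set_lmul: "set (lmul xs ys) = {(\<lambda>w. x w + y w) | x y. x \<in> set xs \<and> y \<in> set ys}"
  by (auto simp: lmul_def)

lemma nf_ne: "fst (nf e) \<noteq> [] \<and> snd (nf e) \<noteq> []"
  by (induction e) (auto simp: lmul_ne)

lemma nf_supp: "sfvars e \<subseteq> V \<Longrightarrow> \<forall>m\<in>set (fst (nf e)) \<union> set (snd (nf e)). \<forall>w. w \<notin> V \<longrightarrow> m w = 0"
  by (induction e) (auto simp: set_lmul mvar_def)

lemma mon_add: "mon V p (\<lambda>w. x w + y w) = mon V p x * mon V p y"
  by (simp add: mon_def power_add prod.distrib)

lemma rv_append: "rv V p (xs @ ys) = rv V p xs + rv V p ys" by (simp add: rv_def)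
lemma rv_lmul: "rv V p (lmul xs ys) = rv V p xs * rv V p ys"
  by (induction xs) (auto simp: lmul_Cons rv_append mon_add rv_def sum_list_const_mult distrib_right comp_def)

lemma rv_pos: "(\<forall>v. 0 < p v) \<Longrightarrow> xs \<noteq> [] \<Longrightarrow> 0 < rv V p xs"
proof (induction xs)
  case Nil then show ?case by simp
next
  case (Cons x xs)
  then show ?case using mon_pos[of p V x] by (cases "xs = []") (auto simp: rv_def intro!: add_pos_pos)
qed

lemma nf_real:
  assumes "finite V" "\<forall>v. 0 < p v"
  shows "sfvars e \<subseteq> V \<Longrightarrow> sfeval_real e p = rv V p (fst (nf e)) / rv V p (snd (nf e))"
proof (induction e)
  case (SVar v)
  have "mon V p (mvar v) = p v"
  proof -
    have "mon V p (mvar v) = (\<Prod>w\<in>V. if w = v then p w else 1)"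
      unfolding mon_def mvar_def by (rule prod.cong) auto
    then show ?thesis using SVar assms by simp
  qed
  then show ?case by (simp add: rv_def mon_def)
next
  case (SAdd a b)
  have pos: "0 < rv V p (snd (nf a))" "0 < rv V p (snd (nf b))" "0 < rv V p (fst (nf b))" using rv_pos assms nf_ne by blast+
  have "sfeval_real (SAdd a b) p = rv V p (fst (nf a)) / rv V p (snd (nf a)) + rv V p (fst (nf b)) / rv V p (snd (nf b))" using SAdd by simp
  also have "\<dots> = rv V p (fst (nf (SAdd a b))) / rv V p (snd (nf (SAdd a b)))" using pos by (simp add: rv_append rv_lmul field_simps)
  finally show ?case .
next
  case (SMul a b)
  have pos: "0 < rv V p (snd (nf a))" "0 < rv V p (snd (nf b))" "0 < rv V p (fst (nf b))" using rv_pos assms nf_ne by blast+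
  have "sfeval_real (SMul a b) p = rv V p (fst (nf a)) / rv V p (snd (nf a)) * (rv V p (fst (nf b)) / rv V p (snd (nf b)))" using SMul by simp
  also have "\<dots> = rv V p (fst (nf (SMul a b))) / rv V p (snd (nf (SMul a b)))" using pos by (simp add: rv_append rv_lmul field_simps)
  finally show ?case .
next
  case (SDiv a b)
  have pos: "0 < rv V p (snd (nf a))" "0 < rv V p (snd (nf b))" "0 < rv V p (fst (nf b))" using rv_pos assms nf_ne by blast+
  have "sfeval_real (SDiv a b) p = rv V p (fst (nf a)) / rv V p (snd (nf a)) / (rv V p (fst (nf b)) / rv V p (snd (nf b)))" using SDiv by simp
  also have "\<dots> = rv V p (fst (nf (SDiv a b))) / rv V p (snd (nf (SDiv a b)))" using pos by (simp add: rv_append rv_lmul field_simps)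
  finally show ?case .
qed

fun lsum :: "('p,'m) semifield_ops_scheme \<Rightarrow> 'p list \<Rightarrow> 'p" where
  "lsum P [] = sf_one P"
| "lsum P [x] = x"
| "lsum P (x # y # ys) = sf_add P x (lsum P (y # ys))"

lemma lsum_Cons: "xs \<noteq> [] \<Longrightarrow> lsum P (x # xs) = sf_add P x (lsum P xs)"
  by (cases xs) auto

context sfl begin

abbreviation "C \<equiv> sf_carrier P"

definition npow :: "'p \<Rightarrow> nat \<Rightarrow> 'p" where "npow x m = (sf_mul P x ^^ m) (sf_one P)"

lemma npow_c[simp]: "x \<in> C \<Longrightarrow> npow x m \<in> C"
  unfolding npow_def by (induction m) auto
lemma npow_add: "x \<in> C \<Longrightarrow> npow x (m1 + m2) = sf_mul P (npow x m1) (npow x m2)"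
  unfolding npow_def by (induction m1) (auto simp: m_assoc npow_def[symmetric])
lemma npow_0[simp]: "npow x 0 = sf_one P" by (simp add: npow_def)
lemma npow_Suc0[simp]: "x \<in> C \<Longrightarrow> npow x (Suc 0) = x" by (simp add: npow_def)
lemma npow_1[simp]: "x \<in> C \<Longrightarrow> npow x 1 = x" by (simp add: npow_def)

lemma swap4: "a \<in> C \<Longrightarrow> b \<in> C \<Longrightarrow> c \<in> C \<Longrightarrow> e \<in> C \<Longrightarrow>
   sf_mul P (sf_mul P a b) (sf_mul P c e) = sf_mul P (sf_mul P a c) (sf_mul P b e)"
  by (simp add: m_assoc m_lcomm[of b c])

definition monP :: "'v list \<Rightarrow> ('v \<Rightarrow> 'p) \<Rightarrow> ('v \<Rightarrow> nat) \<Rightarrow> 'p" where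
  "monP vl a m = foldr (\<lambda>v acc. sf_mul P (npow (a v) (m v)) acc) vl (sf_one P)"

lemma monP_c[simp]: "\<forall>v\<in>set vl. a v \<in> C \<Longrightarrow> monP vl a m \<in> C"
  unfolding monP_def by (induction vl) auto

lemma monP_add: "\<forall>v\<in>set vl. a v \<in> C \<Longrightarrow> monP vl a (\<lambda>w. m1 w + m2 w) = sf_mul P (monP vl a m1) (monP vl a m2)"
proof (induction vl)
  case Nil then show ?case by (simp add: monP_def)
next
  case (Cons v vl)
  then have c: "a v \<in> C" "\<forall>v\<in>set vl. a v \<in> C" by auto
  have "monP (v#vl) a (\<lambda>w. m1 w + m2 w) = sf_mul P (sf_mul P (npow (a v) (m1 v)) (npow (a v) (m2 v)))
     (sf_mul P (monP vl a m1) (monP vl a m2))"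
    using Cons c by (simp add: monP_def npow_add)
  also have "\<dots> = sf_mul P (sf_mul P (npow (a v) (m1 v)) (monP vl a m1)) (sf_mul P (npow (a v) (m2 v)) (monP vl a m2))"
    using c by (simp add: swap4)
  finally show ?case by (simp add: monP_def)
qed

lemma monP_zero: "monP vl a (\<lambda>_. 0) = sf_one P"
  unfolding monP_def by (induction vl) auto

lemma monP_var: "distinct vl \<Longrightarrow> \<forall>v\<in>set vl. a v \<in> C \<Longrightarrow> v \<in> set vl \<Longrightarrow> monP vl a (mvar v) = a v"
proof (induction vl)
  case Nil then show ?case by simp
next
  case (Cons u vl)
  show ?case
  proof (cases "u = v")
    case True
    then have "v \<notin> set vl" using Cons by auto
    then have "monP vl a (mvar v) = sf_one P"
      unfolding monP_def mvar_def by (induction vl) auto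
    then show ?thesis using True Cons.prems by (simp add: monP_def mvar_def)
  next
    case False
    then show ?thesis using Cons by (simp add: monP_def mvar_def)
  qed
qed

lemma lsum_c[simp]: "set xs \<subseteq> C \<Longrightarrow> lsum P xs \<in> C"
proof (induction xs)
  case (Cons x xs) then show ?case by (cases "xs = []") (auto simp: lsum_Cons)
qed simp

lemma lsum_append: "xs \<noteq> [] \<Longrightarrow> ys \<noteq> [] \<Longrightarrow> set xs \<subseteq> C \<Longrightarrow> set ys \<subseteq> C \<Longrightarrow>
   lsum P (xs @ ys) = sf_add P (lsum P xs) (lsum P ys)"
proof (induction xs)
  case Nil then show ?case by simp
next
  case (Cons x xs)
  show ?case
  proof (cases "xs = []")
    case True then show ?thesis using Cons by (simp add: lsum_Cons)
  next
    case False then show ?thesis using Cons by (simp add: lsum_Cons a_assoc)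
  qed
qed

lemma lsum_mul: "xs \<noteq> [] \<Longrightarrow> set xs \<subseteq> C \<Longrightarrow> c \<in> C \<Longrightarrow> lsum P (map (sf_mul P c) xs) = sf_mul P c (lsum P xs)"
proof (induction xs)
  case Nil then show ?case by simp
next
  case (Cons x xs)
  show ?case
  proof (cases "xs = []")
    case True then show ?thesis by simp
  next
    case False then show ?thesis using Cons by (simp add: lsum_Cons distl)
  qed
qed

lemma lsum_remove: "x \<in> set ys \<Longrightarrow> set ys \<subseteq> C \<Longrightarrow> remove1 x ys \<noteq> [] \<Longrightarrow> lsum P ys = sf_add P x (lsum P (remove1 x ys))"
proof (induction ys)
  case Nil then show ?case by simp
next
  case (Cons y ys)
  show ?case
  proof (cases "y = x")
    case True then show ?thesis using Cons by (simp add: lsum_Cons)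
  next
    case False
    then have x: "x \<in> set ys" using Cons by auto
    then have ne: "ys \<noteq> []" by auto
    show ?thesis
    proof (cases "remove1 x ys = []")
      case True
      then have "ys = [x]" using x by (cases ys) (auto split: if_splits)
      then show ?thesis using False Cons.prems by (simp add: a_comm)
    next
      case F2: False
      have "lsum P (y#ys) = sf_add P y (sf_add P x (lsum P (remove1 x ys)))"
        using Cons x ne F2 by (simp add: lsum_Cons)
      also have "\<dots> = sf_add P x (sf_add P y (lsum P (remove1 x ys)))"
        using Cons.prems x by (intro a_lcomm) (use set_remove1_subset[of x ys] in auto)
      finally show ?thesis using False F2 by (simp add: lsum_Cons)
    qed
  qed
qed

end

context sfl begin

lemma lsum_perm: "mset xs = mset ys \<Longrightarrow> set xs \<subseteq> C \<Longrightarrow> lsum P xs = lsum P ys"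
proof (induction xs arbitrary: ys)
  case Nil then show ?case by simp
next
  case (Cons x xs)
  have x: "x \<in> set ys" using Cons.prems(1) by (metis list.set_intros(1) set_mset_mset)
  have cy: "set ys \<subseteq> C" using Cons.prems by (metis set_mset_mset)
  show ?case
  proof (cases "xs = []")
    case True
    then have "ys = [x]" using Cons.prems(1) by (cases ys) auto
    then show ?thesis using True by simp
  next
    case False
    have m: "mset xs = mset (remove1 x ys)" by (metis Cons.prems(1) add_mset_remove_trivial mset.simps(2) mset_remove1)
    have ne: "remove1 x ys \<noteq> []"
    proof
      assume "remove1 x ys = []"
      then have "mset xs = {#}" using m by (simp del: mset_remove1)
      then show False using False by simp
    qed
    have "lsum P (x#xs) = sf_add P x (lsum P (remove1 x ys))"
    proof -
      have "lsum P xs = lsum P (remove1 x ys)" using Cons.IH[OF m] Cons.prems(2) by simp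
      then show ?thesis using False by (simp add: lsum_Cons)
    qed
    also have "\<dots> = lsum P ys" using lsum_remove[OF x cy ne] by simp
    finally show ?thesis .
  qed
qed

definition psum :: "'v list \<Rightarrow> ('v \<Rightarrow> 'p) \<Rightarrow> ('v \<Rightarrow> nat) list \<Rightarrow> 'p" where
  "psum vl a xs = lsum P (map (monP vl a) xs)"

lemma psum_c[simp]: "\<forall>v\<in>set vl. a v \<in> C \<Longrightarrow> psum vl a xs \<in> C"
  unfolding psum_def by (rule lsum_c) auto

lemma psum_lmul:
  assumes a: "\<forall>v\<in>set vl. a v \<in> C" and ys: "ys \<noteq> []"
  shows "xs \<noteq> [] \<Longrightarrow> psum vl a (lmul xs ys) = sf_mul P (psum vl a xs) (psum vl a ys)"
proof (induction xs)
  case Nil then show ?case by simp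
next
  case (Cons x xs)
  have hx: "psum vl a (map (\<lambda>y w. x w + y w) ys) = sf_mul P (monP vl a x) (psum vl a ys)"
  proof -
    have e: "map (monP vl a) (map (\<lambda>y w. x w + y w) ys) = map (sf_mul P (monP vl a x)) (map (monP vl a) ys)"
      using a by (simp add: monP_add)
    show ?thesis unfolding psum_def e by (rule lsum_mul) (use ys a in auto)
  qed
  show ?case
  proof (cases "xs = []")
    case True then show ?thesis using hx by (simp add: lmul_Cons psum_def)
  next
    case False
    have "psum vl a (lmul (x#xs) ys) = sf_add P (psum vl a (map (\<lambda>y w. x w + y w) ys)) (psum vl a (lmul xs ys))"
      unfolding lmul_Cons psum_def map_append using ys False lmul_ne[OF False ys] a
      by (subst lsum_append) (auto simp: image_subset_iff)
    also have "\<dots> = sf_mul P (sf_add P (monP vl a x) (psum vl a xs)) (psum vl a ys)"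
      using hx Cons.IH[OF False] a by (simp add: distr)
    also have "sf_add P (monP vl a x) (psum vl a xs) = psum vl a (x#xs)"
      using False by (simp add: psum_def lsum_Cons)
    finally show ?thesis .
  qed
qed

lemma psum_append: "\<forall>v\<in>set vl. a v \<in> C \<Longrightarrow> xs \<noteq> [] \<Longrightarrow> ys \<noteq> [] \<Longrightarrow>
  psum vl a (xs @ ys) = sf_add P (psum vl a xs) (psum vl a ys)"
  unfolding psum_def by (subst map_append, rule lsum_append) (auto simp: image_subset_iff)

lemma m_cancel_l: "a \<in> C \<Longrightarrow> b \<in> C \<Longrightarrow> sf_mul P (sf_inv P a) (sf_mul P a b) = b"
proof -
  assume c: "a \<in> C" "b \<in> C"
  have "sf_mul P (sf_inv P a) (sf_mul P a b) = sf_mul P (sf_mul P (sf_inv P a) a) b" using c by (intro m_assoc[symmetric]) auto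
  then show ?thesis using c by simp
qed
lemma m_cancel_r: "a \<in> C \<Longrightarrow> b \<in> C \<Longrightarrow> sf_mul P a (sf_mul P (sf_inv P a) b) = b"
proof -
  assume c: "a \<in> C" "b \<in> C"
  have "sf_mul P a (sf_mul P (sf_inv P a) b) = sf_mul P (sf_mul P a (sf_inv P a)) b" using c by (intro m_assoc[symmetric]) auto
  then show ?thesis using c by simp
qed

lemma inv_unique: "a \<in> C \<Longrightarrow> b \<in> C \<Longrightarrow> sf_mul P a b = sf_one P \<Longrightarrow> b = sf_inv P a"
proof -
  assume c: "a \<in> C" "b \<in> C" and e: "sf_mul P a b = sf_one P"
  have "b = sf_mul P (sf_inv P a) (sf_mul P a b)" using c by (simp add: m_cancel_l)
  also have "\<dots> = sf_inv P a" using c e by simp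
  finally show ?thesis .
qed

lemma inv_mul: "a \<in> C \<Longrightarrow> b \<in> C \<Longrightarrow> sf_inv P (sf_mul P a b) = sf_mul P (sf_inv P a) (sf_inv P b)"
proof -
  assume c: "a \<in> C" "b \<in> C"
  have "sf_mul P (sf_mul P a b) (sf_mul P (sf_inv P a) (sf_inv P b)) = sf_mul P (sf_mul P a (sf_inv P a)) (sf_mul P b (sf_inv P b))"
    using c by (intro swap4) auto
  also have "\<dots> = sf_one P" using c by simp
  finally show ?thesis using c by (intro inv_unique[symmetric]) auto
qed

lemma inv_inv: "a \<in> C \<Longrightarrow> sf_inv P (sf_inv P a) = a"
  by (rule inv_unique[symmetric]) auto

lemma inv_one[simp]: "sf_inv P (sf_one P) = sf_one P"
  by (rule inv_unique[symmetric]) auto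

lemma frac_add: "a \<in> C \<Longrightarrow> b \<in> C \<Longrightarrow> c \<in> C \<Longrightarrow> e \<in> C \<Longrightarrow>
  sf_add P (sf_mul P a (sf_inv P b)) (sf_mul P c (sf_inv P e)) =
  sf_mul P (sf_add P (sf_mul P a e) (sf_mul P c b)) (sf_inv P (sf_mul P b e))"
proof -
  assume cc: "a \<in> C" "b \<in> C" "c \<in> C" "e \<in> C"
  have 1: "sf_mul P (sf_mul P a e) (sf_mul P (sf_inv P b) (sf_inv P e)) = sf_mul P a (sf_inv P b)"
  proof -
    have "sf_mul P (sf_mul P a e) (sf_mul P (sf_inv P b) (sf_inv P e)) = sf_mul P (sf_mul P a (sf_inv P b)) (sf_mul P e (sf_inv P e))"
      using cc by (intro swap4) auto
    then show ?thesis using cc by simp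
  qed
  have 2: "sf_mul P (sf_mul P c b) (sf_mul P (sf_inv P b) (sf_inv P e)) = sf_mul P c (sf_inv P e)"
  proof -
    have "sf_mul P (sf_mul P c b) (sf_mul P (sf_inv P b) (sf_inv P e)) = sf_mul P (sf_mul P c (sf_inv P e)) (sf_mul P b (sf_inv P b))"
    proof -
      have "sf_mul P (sf_inv P b) (sf_inv P e) = sf_mul P (sf_inv P e) (sf_inv P b)" using cc by (intro m_comm) auto
      moreover have "sf_mul P (sf_mul P c b) (sf_mul P (sf_inv P e) (sf_inv P b)) = sf_mul P (sf_mul P c (sf_inv P e)) (sf_mul P b (sf_inv P b))"
        using cc by (intro swap4) auto
      ultimately show ?thesis by simp
    qed
    then show ?thesis using cc by simp
  qed
  show ?thesis using cc by (simp add: inv_mul distr 1 2)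
qed

lemma frac_mul: "a \<in> C \<Longrightarrow> b \<in> C \<Longrightarrow> c \<in> C \<Longrightarrow> e \<in> C \<Longrightarrow>
  sf_mul P (sf_mul P a (sf_inv P b)) (sf_mul P c (sf_inv P e)) =
  sf_mul P (sf_mul P a c) (sf_inv P (sf_mul P b e))"
  by (simp add: inv_mul swap4)

lemma frac_div: "a \<in> C \<Longrightarrow> b \<in> C \<Longrightarrow> c \<in> C \<Longrightarrow> e \<in> C \<Longrightarrow>
  sf_mul P (sf_mul P a (sf_inv P b)) (sf_inv P (sf_mul P c (sf_inv P e))) =
  sf_mul P (sf_mul P a e) (sf_inv P (sf_mul P b c))"
  by (simp add: inv_mul inv_inv swap4 m_comm[of "sf_inv P c"])

lemma nf_P:
  assumes vl: "distinct vl" and a: "\<forall>v\<in>set vl. a v \<in> C"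
  shows "sfvars e \<subseteq> set vl \<Longrightarrow> sfeval P e a = sf_mul P (psum vl a (fst (nf e))) (sf_inv P (psum vl a (snd (nf e))))"
proof (induction e)
  case (SVar v)
  then show ?case using a monP_var[OF vl a, of v] by (simp add: psum_def monP_zero)
next
  case (SAdd e f)
  then show ?case using nf_ne[of e] nf_ne[of f] a
    by (simp add: frac_add psum_lmul psum_append lmul_ne m_comm[of "psum vl a (snd (nf e))"])
next
  case (SMul e f)
  then show ?case using nf_ne[of e] nf_ne[of f] a by (simp add: frac_mul psum_lmul)
next
  case (SDiv e f)
  then show ?case using nf_ne[of e] nf_ne[of f] a by (simp add: frac_div psum_lmul)
qed

theorem universal:
  assumes vl: "distinct vl" and a: "\<forall>v\<in>set vl. a v \<in> C"
    and v1: "sfvars e1 \<subseteq> set vl" and v2: "sfvars e2 \<subseteq> set vl"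
    and eq: "\<forall>p. (\<forall>v. 0 < p v) \<longrightarrow> sfeval_real e1 p = sfeval_real e2 p"
  shows "sfeval P e1 a = sfeval P e2 a"
proof -
  define N1 D1 N2 D2 where "N1 = fst (nf e1)" "D1 = snd (nf e1)" "N2 = fst (nf e2)" "D2 = snd (nf e2)"
  have ne: "N1 \<noteq> []" "D1 \<noteq> []" "N2 \<noteq> []" "D2 \<noteq> []" using nf_ne N1_D1_N2_D2_def by auto
  have "\<forall>p. (\<forall>v. 0 < p v) \<longrightarrow> rv (set vl) p (lmul N1 D2) = rv (set vl) p (lmul N2 D1)"
  proof (intro allI impI)
    fix p :: "'a \<Rightarrow> real" assume p: "\<forall>v. 0 < p v"
    have pos: "0 < rv (set vl) p D1" "0 < rv (set vl) p D2" using rv_pos[OF p] ne by auto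
    have "rv (set vl) p N1 / rv (set vl) p D1 = rv (set vl) p N2 / rv (set vl) p D2"
      using eq p nf_real[OF _ p v1] nf_real[OF _ p v2] N1_D1_N2_D2_def by simp
    then show "rv (set vl) p (lmul N1 D2) = rv (set vl) p (lmul N2 D1)"
      using pos by (simp add: rv_lmul field_simps)
  qed
  moreover have "\<forall>m\<in>set (lmul N1 D2) \<union> set (lmul N2 D1). \<forall>w. w \<notin> set vl \<longrightarrow> m w = 0"
    using nf_supp[OF v1] nf_supp[OF v2] N1_D1_N2_D2_def by (auto simp: set_lmul)
  ultimately have "mset (lmul N1 D2) = mset (lmul N2 D1)" by (intro ident) auto
  then have "psum vl a (lmul N1 D2) = psum vl a (lmul N2 D1)"
    unfolding psum_def using a by (intro lsum_perm) auto
  then have "sf_mul P (psum vl a N1) (psum vl a D2) = sf_mul P (psum vl a N2) (psum vl a D1)"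
    using ne a by (simp add: psum_lmul)
  then have "sf_mul P (psum vl a N1) (sf_inv P (psum vl a D1)) = sf_mul P (psum vl a N2) (sf_inv P (psum vl a D2))"
    using a by (intro cancel_eq) auto
  then show ?thesis using nf_P[OF vl a v1] nf_P[OF vl a v2] N1_D1_N2_D2_def by simp
qed

end

definition rsf :: "real semifield_ops" where
  "rsf = \<lparr>sf_carrier = UNIV, sf_mul = (\<lambda>a b. a * b), sf_one = 1, sf_inv = inverse, sf_add = (\<lambda>a b. a + b)\<rparr>"

lemma rsf_simps[simp]: "sf_mul rsf = (\<lambda>a b. a * b)" "sf_one rsf = 1" "sf_inv rsf = inverse"
  "sf_add rsf = (\<lambda>a b. a + b)" "sf_carrier rsf = UNIV"
  by (simp_all add: rsf_def)

lemma funpow_rmul: "((\<lambda>b. x * b) ^^ m) (1::real) = x ^ m"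
  by (induction m) auto

lemma rsf_pow: "sf_pow rsf x k = x powi k"
  by (simp add: sf_pow_def power_int_def funpow_rmul power_inverse)

lemma foldr_radd: "foldr (\<lambda>s acc. f s + acc) xs (a::real) = sum_list (map f xs) + a"
  by (induction xs) auto

lemma rsf_sum: "sf_sum rsf f D = (\<Sum>s=0..D. f s)"
proof -
  have "sf_sum rsf f D = sum_list (map f [1..<Suc D]) + f 0" by (simp add: sf_sum_def foldr_radd)
  also have "sum_list (map f [1..<Suc D]) = sum f {Suc 0..D}"
    by (simp only: interv_sum_list_conv_sum_set_nat set_upt atLeastLessThanSuc_atLeastAtMost One_nat_def)
  also have "sum f {Suc 0..D} + f 0 = (\<Sum>s=0..D. f s)" by (simp add: sum.atLeast_Suc_atMost[OF le0])
  finally show ?thesis .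
qed

lemma foldr_rmul: "foldr (\<lambda>s acc. f s * acc) xs (a::real) = prod_list (map f xs) * a"
  by (induction xs) auto

lemma rsf_prod: "sf_prod rsf f n = (\<Prod>j<n. f j)"
proof -
  have "prod_list (map f [0..<n]) = (\<Prod>j<n. f j)" by (induction n) (auto simp: lessThan_Suc mult.commute)
  then show ?thesis by (simp add: sf_prod_def foldr_rmul)
qed

lemma shom_pt: "shom fun_sf rsf (\<lambda>f. f q) UNIV"
  by (simp add: shom_def fun_sf_def)

lemma ln_powi: "0 < (x::real) \<Longrightarrow> ln (x powi k) = real_of_int k * ln x"
  by (cases "0 \<le> k") (auto simp: power_int_def ln_realpow ln_inverse)

lemma powi_pos: "0 < (x::real) \<Longrightarrow> 0 < x powi k"
  by (simp add: power_int_def)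

lemma trop_simps[simp]: "sf_mul trop_sf = (\<lambda>a b v. a v + b v)" "sf_inv trop_sf = (\<lambda>a v. - a v)"
  "sf_one trop_sf = (\<lambda>v. 0)" "sf_add trop_sf = (\<lambda>a b v. min (a v) (b v))"
  by (simp_all add: trop_sf_def)

lemma funpow_tmul: "((\<lambda>b v. a v + b v) ^^ m) (\<lambda>v. 0) = (\<lambda>v. int m * a v)"
  by (induction m) (auto simp: algebra_simps)

lemma trop_pow: "sf_pow trop_sf a k = (\<lambda>v. k * a v)"
proof (cases "0 \<le> k")
  case True then show ?thesis using funpow_tmul[of "nat k" a] by (simp add: sf_pow_def)
next
  case False
  have "((\<lambda>b v. (- a v) + b v) ^^ nat (-k)) (\<lambda>v. 0) = (\<lambda>v. int (nat (-k)) * (- a v))"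
    by (rule funpow_tmul)
  then show ?thesis using False by (simp add: sf_pow_def)
qed

lemma foldr_tmin: "(\<forall>s\<in>set xs. 0 \<le> f s v) \<Longrightarrow> a v = 0 \<Longrightarrow>
   foldr (\<lambda>s acc w. min (f s w) (acc w)) xs a v = (0::int)"
  by (induction xs) auto

lemma trop_sum0: "(\<forall>s\<le>D. 0 \<le> f s v) \<Longrightarrow> f 0 v = 0 \<Longrightarrow> sf_sum trop_sf f D v = 0"
  unfolding sf_sum_def trop_simps by (rule foldr_tmin) auto

lemma zt0: "zt d k 0 = (\<lambda>v. 0)" "zt d k (d k) = (\<lambda>v. 0)" by (auto simp: zt_def)

lemma mutY_trop_VZ:
  assumes "\<forall>i a b. Y i (VZ a b) = 0"
  shows "mutY trop_sf d (zt d) k B Y i (VZ a b) = 0"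
proof -
  have "sf_sum trop_sf (\<lambda>s. sf_mul trop_sf (zt d k s) (sf_pow trop_sf (Y k) (int s))) (d k) (VZ a b) = 0"
    using assms by (intro trop_sum0) (auto simp: trop_pow zt_def)
  then show ?thesis using assms by (auto simp: mutY_def trop_pow)
qed

lemma finite_yzvars: "finite (yzvars n d)"
proof -
  have "yzvars n d = VY ` {..<n} \<union> (\<Union>i<n. VZ i ` {1..<d i})" by (auto simp: yzvars_def)
  then show ?thesis by simp
qed

definition lnm :: "nat \<Rightarrow> (nat \<Rightarrow> nat) \<Rightarrow> (var \<Rightarrow> int) \<Rightarrow> (var \<Rightarrow> real) \<Rightarrow> real" where
  "lnm n d m q = (\<Sum>v\<in>yzvars n d. real_of_int (m v) * ln (q v))"

lemma meval_pos: "positive_point q \<Longrightarrow> 0 < meval n d m q"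
  unfolding meval_def positive_point_def by (intro prod_pos ballI powi_pos) auto

lemma ln_meval: "positive_point q \<Longrightarrow> ln (meval n d m q) = lnm n d m q"
proof -
  assume q: "positive_point q"
  then have pos: "\<And>v. 0 < q v powi m v" by (intro powi_pos) (simp add: positive_point_def)
  have "ln (meval n d m q) = (\<Sum>v\<in>yzvars n d. ln (q v powi m v))"
    unfolding meval_def by (rule ln_prod[OF finite_yzvars]) (use pos in \<open>metis less_irrefl\<close>)
  also have "\<dots> = lnm n d m q" unfolding lnm_def using q by (simp add: ln_powi positive_point_def)
  finally show ?thesis .
qed

lemma lnm_add: "lnm n d (\<lambda>v. a v + b v) q = lnm n d a q + lnm n d b q"
  by (simp add: lnm_def sum.distrib algebra_simps)
lemma lnm_scale: "lnm n d (\<lambda>v. k * a v) q = real_of_int k * lnm n d a q"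
  by (simp add: lnm_def sum_distrib_left algebra_simps)
lemma lnm_neg: "lnm n d (\<lambda>v. - a v) q = - lnm n d a q"
  by (simp add: lnm_def sum_negf)

lemma meval_zt: "k < n \<Longrightarrow> s \<le> d k \<Longrightarrow> meval n d (zt d k s) q = (if s = 0 \<or> s = d k then 1 else q (zv d k s))"
proof -
  assume k: "k < n" "s \<le> d k"
  show ?thesis
  proof (cases "s = 0 \<or> s = d k")
    case True then show ?thesis by (auto simp: meval_def zt_def)
  next
    case False
    then have inn: "zv d k s \<in> yzvars n d" using k by (auto simp: zv_def yzvars_def)
    have "meval n d (zt d k s) q = (\<Prod>v\<in>yzvars n d. if v = zv d k s then q v else 1)"
      unfolding meval_def zt_def using False k by (intro prod.cong) auto
    then show ?thesis using False inn finite_yzvars by simp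
  qed
qed

lemma meval_yt0: "j < n \<Longrightarrow> meval n d (yt0 j) q = q (VY j)"
proof -
  assume j: "j < n"
  have "meval n d (yt0 j) q = (\<Prod>v\<in>yzvars n d. if v = VY j then q v else 1)"
    unfolding meval_def yt0_def by (intro prod.cong) auto
  then show ?thesis using j finite_yzvars by (simp add: yzvars_def)
qed

lemma meval_VY:
  assumes "\<forall>a b. m (VZ a b) = 0"
  shows "meval n d m q = (\<Prod>j<n. q (VY j) powi m (VY j))"
proof -
  have "meval n d m q = (\<Prod>v\<in>VY ` {..<n}. q v powi m v)"
    unfolding meval_def
  proof (rule prod.mono_neutral_right)
    show "finite (yzvars n d)" by (rule finite_yzvars)
    show "VY ` {..<n} \<subseteq> yzvars n d" by (auto simp: yzvars_def)
    show "\<forall>i\<in>yzvars n d - VY ` {..<n}. q i powi m i = 1"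
    proof
      fix i assume "i \<in> yzvars n d - VY ` {..<n}"
      then obtain a b where "i = VZ a b" by (auto simp: yzvars_def)
      then show "q i powi m i = 1" using assms by simp
    qed
  qed
  also have "\<dots> = (\<Prod>j<n. q (VY j) powi m (VY j))" by (subst prod.reindex) (auto simp: inj_on_def)
  finally show ?thesis .
qed


definition hat :: "nat \<Rightarrow> (nat \<Rightarrow> nat) \<Rightarrow> (nat \<Rightarrow> nat \<Rightarrow> int) \<Rightarrow> (nat \<Rightarrow> var \<Rightarrow> int)
    \<Rightarrow> (nat \<Rightarrow> (var \<Rightarrow> real) \<Rightarrow> real) \<Rightarrow> (var \<Rightarrow> real) \<Rightarrow> nat \<Rightarrow> real" where
  "hat n d B Y X q i = meval n d (Y i) q * (\<Prod>j<n. X j q powi B j i)"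

definition zq :: "(nat \<Rightarrow> nat) \<Rightarrow> (var \<Rightarrow> real) \<Rightarrow> nat \<Rightarrow> nat \<Rightarrow> real" where
  "zq d q k s = (if s = 0 \<or> s = d k then 1 else q (zv d k s))"

lemma hat_pos: "positive_point q \<Longrightarrow> \<forall>j. 0 < X j q \<Longrightarrow> 0 < hat n d B Y X q i"
  unfolding hat_def by (intro mult_pos_pos meval_pos prod_pos ballI powi_pos) auto

lemma ln_hat: "positive_point q \<Longrightarrow> \<forall>j. 0 < X j q \<Longrightarrow>
  ln (hat n d B Y X q i) = lnm n d (Y i) q + (\<Sum>j<n. real_of_int (B j i) * ln (X j q))"
proof -
  assume q: "positive_point q" and X: "\<forall>j. 0 < X j q"
  have p1: "0 < (\<Prod>j<n. X j q powi B j i)" using X by (intro prod_pos ballI powi_pos) auto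
  have "ln (\<Prod>j<n. X j q powi B j i) = (\<Sum>j<n. ln (X j q powi B j i))"
  proof (rule ln_prod)
    fix j show "X j q powi B j i \<noteq> 0" using powi_pos[of "X j q" "B j i"] X by (metis less_irrefl)
  qed simp
  moreover have "(\<Sum>j<n. ln (X j q powi B j i)) = (\<Sum>j<n. real_of_int (B j i) * ln (X j q))"
    using X by (simp add: ln_powi)
  ultimately show ?thesis unfolding hat_def using ln_mult_pos[OF meval_pos[OF q] p1] ln_meval[OF q] by simp
qed

lemma pos_nonneg: "0 \<le> pos a" by (simp add: pos_def)

lemma sum_split: "k < (n::nat) \<Longrightarrow> (\<Sum>j<n. f j) = f k + (\<Sum>j\<in>{..<n}-{k}. f j)"
  using sum.remove[of "{..<n}" k f] by auto

lemma hat_step: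
  assumes q: "positive_point q" and X: "\<forall>j. 0 < X j q" and k: "k < n" and i: "i < n"
    and Bkk: "B k k = 0"
  shows "(\<forall>j. 0 < mutX n d k B Y X j q) \<and>
    hat n d (mutB d k B) (mutY trop_sf d (zt d) k B Y) (mutX n d k B Y X) q i =
    mutY rsf d (zq d q) k B (hat n d B Y X q) i"
proof -
  define yh where "yh = hat n d B Y X q"
  define L where "L j = ln (X j q)" for j
  define D where "D = real (d k)"
  define S where "S = (\<Sum>s=0..d k. meval n d (zt d k s) q * yh k ^ s)"
  define Tv where "Tv = sf_sum trop_sf (\<lambda>s. sf_mul trop_sf (zt d k s) (sf_pow trop_sf (Y k) (int s))) (d k)"
  define M where "M = (\<Prod>j<n. X j q ^ nat (pos (- B j k)))"
  define A' where "A' = {..<n} - {k}"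
  have yh_pos: "0 < yh j" for j unfolding yh_def using hat_pos[of q X n d B Y j] q X by blast
  have S_pos: "0 < S" unfolding S_def
  proof (rule sum_pos2[of _ 0])
    show "0 < meval n d (zt d k 0) q * yh k ^ 0" by (simp add: zt0 meval_def)
    show "\<And>s. s \<in> {0..d k} \<Longrightarrow> 0 \<le> meval n d (zt d k s) q * yh k ^ s"
      using meval_pos[OF q] yh_pos by (simp add: less_imp_le)
  qed auto
  have T_pos: "0 < meval n d Tv q" by (rule meval_pos[OF q])
  have M_pos: "0 < M" unfolding M_def using X by (intro prod_pos) auto
  have lnM: "ln M = (\<Sum>j<n. real_of_int (pos (- B j k)) * L j)"
  proof -
    have "ln M = (\<Sum>j<n. ln (X j q ^ nat (pos (- B j k))))" unfolding M_def
    proof (rule ln_prod)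
      fix j show "X j q ^ nat (pos (- B j k)) \<noteq> 0" using X by (metis less_irrefl zero_less_power)
    qed simp
    then show ?thesis using X pos_nonneg by (simp add: ln_realpow L_def)
  qed
  have Xk: "mutX n d k B Y X k q = inverse (X k q) * M ^ d k * S / meval n d Tv q"
    by (simp add: mutX_def M_def S_def Tv_def yh_def hat_def Let_def)
  have Xk_pos: "0 < mutX n d k B Y X k q" unfolding Xk using X M_pos S_pos T_pos by simp
  have Xpos: "\<forall>j. 0 < mutX n d k B Y X j q"
    using Xk_pos X by (auto simp: mutX_def)
  have lnXk: "ln (mutX n d k B Y X k q) = - L k + D * (\<Sum>j<n. real_of_int (pos (- B j k)) * L j) + ln S - lnm n d Tv q"
  proof -
    have xk: "0 < X k q" using X by simp
    have "ln (inverse (X k q) * M ^ d k * S / meval n d Tv q) = ln (inverse (X k q)) + ln (M ^ d k) + ln S - ln (meval n d Tv q)"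
      using xk M_pos S_pos T_pos by (simp add: ln_mult_pos ln_divide_pos)
    then show ?thesis unfolding Xk by (simp add: ln_inverse ln_realpow lnM ln_meval[OF q] L_def D_def)
  qed
  have lnXo: "ln (mutX n d k B Y X j q) = L j" if "j \<noteq> k" for j using that by (simp add: mutX_def L_def)
  have lnyh: "ln (yh j) = lnm n d (Y j) q + (\<Sum>j'<n. real_of_int (B j' j) * L j')" for j
    unfolding yh_def L_def using ln_hat[of q X n d B Y j] q X by blast
  have lnh': "ln (hat n d (mutB d k B) (mutY trop_sf d (zt d) k B Y) (mutX n d k B Y X) q i) =
     lnm n d (mutY trop_sf d (zt d) k B Y i) q + (\<Sum>j<n. real_of_int (mutB d k B j i) * ln (mutX n d k B Y X j q))"
    using ln_hat[of q "mutX n d k B Y X" n d "mutB d k B" "mutY trop_sf d (zt d) k B Y" i] q Xpos by blast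
  have Sreal: "sf_sum rsf (\<lambda>s. sf_mul rsf (zq d q k s) (sf_pow rsf (yh k) (int s))) (d k) = S"
    unfolding S_def rsf_sum rsf_simps rsf_pow
    by (rule sum.cong) (auto simp: meval_zt[OF k] zq_def power_int_of_nat)
  have h'_pos: "0 < hat n d (mutB d k B) (mutY trop_sf d (zt d) k B Y) (mutX n d k B Y X) q i"
    using hat_pos[of q "mutX n d k B Y X" n d "mutB d k B" "mutY trop_sf d (zt d) k B Y" i] q Xpos by blast
  show ?thesis
  proof (cases "i = k")
    case True
    have rhs: "mutY rsf d (zq d q) k B yh i = inverse (yh k)" using True by (simp add: mutY_def)
    have "ln (hat n d (mutB d k B) (mutY trop_sf d (zt d) k B Y) (mutX n d k B Y X) q i) = ln (inverse (yh k))"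
    proof -
      have "lnm n d (mutY trop_sf d (zt d) k B Y i) q = - lnm n d (Y k) q"
        using True by (simp add: mutY_def lnm_neg)
      moreover have "(\<Sum>j<n. real_of_int (mutB d k B j i) * ln (mutX n d k B Y X j q)) = - (\<Sum>j\<in>A'. real_of_int (B j k) * L j)"
        using True k Bkk unfolding A'_def
        by (simp add: sum_split[OF k] mutB_def lnXo sum_negf[symmetric])
      moreover have "ln (inverse (yh k)) = - lnm n d (Y k) q - (\<Sum>j\<in>A'. real_of_int (B j k) * L j)"
        using yh_pos lnyh[of k] Bkk unfolding A'_def by (simp add: ln_inverse sum_split[OF k])
      ultimately show ?thesis using lnh' by simp
    qed
    then show ?thesis using Xpos h'_pos yh_pos rhs by (simp add: yh_def)
  next
    case False
    define e where "e = real_of_int (B k i)"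
    define Pp where "Pp = real_of_int (pos (B k i))"
    have rhs: "mutY rsf d (zq d q) k B yh i = yh i * (yh k powi (int (d k) * pos (B k i))) * S powi (- B k i)"
      using False Sreal by (simp add: mutY_def rsf_pow)
    have lnrhs: "ln (mutY rsf d (zq d q) k B yh i) = ln (yh i) + D * Pp * ln (yh k) - e * ln S"
      unfolding rhs using yh_pos S_pos
      by (simp add: ln_mult_pos powi_pos ln_powi D_def Pp_def e_def)
    have lY: "lnm n d (mutY trop_sf d (zt d) k B Y i) q = lnm n d (Y i) q + D * Pp * lnm n d (Y k) q - e * lnm n d Tv q"
    proof -
      define c where "c = int (d k) * pos (B k i)"
      have f: "mutY trop_sf d (zt d) k B Y i = (\<lambda>v. (Y i v + c * Y k v) + (- B k i) * Tv v)"
        using False by (simp add: mutY_def trop_pow Tv_def c_def algebra_simps)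
      have 1: "lnm n d (\<lambda>v. (Y i v + c * Y k v) + (- B k i) * Tv v) q = lnm n d (\<lambda>v. Y i v + c * Y k v) q + lnm n d (\<lambda>v. (- B k i) * Tv v) q"
        by (rule lnm_add)
      have 2: "lnm n d (\<lambda>v. Y i v + c * Y k v) q = lnm n d (Y i) q + lnm n d (\<lambda>v. c * Y k v) q"
        by (rule lnm_add)
      show ?thesis unfolding f 1 2 lnm_scale by (simp add: c_def D_def Pp_def e_def)
    qed
    have s1: "(\<Sum>j<n. real_of_int (mutB d k B j i) * ln (mutX n d k B Y X j q)) =
       - e * ln (mutX n d k B Y X k q) + (\<Sum>j\<in>A'. (real_of_int (B j i) + D * (real_of_int (pos (- B j k)) * e + real_of_int (B j k) * Pp)) * L j)"
    proof -
      have "(\<Sum>j\<in>A'. real_of_int (mutB d k B j i) * ln (mutX n d k B Y X j q)) =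
        (\<Sum>j\<in>A'. (real_of_int (B j i) + D * (real_of_int (pos (- B j k)) * e + real_of_int (B j k) * Pp)) * L j)"
        using False by (intro sum.cong) (auto simp: A'_def mutB_def lnXo e_def D_def Pp_def)
      moreover have "real_of_int (mutB d k B k i) = - e" by (simp add: mutB_def e_def)
      ultimately show ?thesis unfolding A'_def sum_split[OF k] by simp
    qed
    have s2: "(\<Sum>j\<in>A'. (real_of_int (B j i) + D * (real_of_int (pos (- B j k)) * e + real_of_int (B j k) * Pp)) * L j)
      = (\<Sum>j\<in>A'. real_of_int (B j i) * L j) + D * e * (\<Sum>j\<in>A'. real_of_int (pos (- B j k)) * L j)
        + D * Pp * (\<Sum>j\<in>A'. real_of_int (B j k) * L j)"
      by (simp add: sum.distrib sum_distrib_left algebra_simps)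
    have s3: "(\<Sum>j<n. real_of_int (pos (- B j k)) * L j) = (\<Sum>j\<in>A'. real_of_int (pos (- B j k)) * L j)"
      unfolding A'_def using Bkk by (simp add: sum_split[OF k] pos_def)
    have s4: "(\<Sum>j<n. real_of_int (B j k) * L j) = (\<Sum>j\<in>A'. real_of_int (B j k) * L j)"
      unfolding A'_def using Bkk by (simp add: sum_split[OF k])
    have s5: "(\<Sum>j<n. real_of_int (B j i) * L j) = e * L k + (\<Sum>j\<in>A'. real_of_int (B j i) * L j)"
      unfolding A'_def by (simp add: sum_split[OF k] e_def)
    have "ln (hat n d (mutB d k B) (mutY trop_sf d (zt d) k B Y) (mutX n d k B Y X) q i) = ln (mutY rsf d (zq d q) k B yh i)"
      unfolding lnh' lY s1 s2 lnrhs lnXk lnyh s3 s4 s5 by (simp add: algebra_simps)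
    moreover have "0 < mutY rsf d (zq d q) k B yh i" unfolding rhs using yh_pos S_pos by (simp add: powi_pos)
    ultimately show ?thesis using Xpos h'_pos by (simp add: yh_def)
  qed
qed


lemma pos_scale: "0 < (c::int) \<Longrightarrow> c * pos x = pos (c * x)"
proof (cases "0 \<le> x")
  case True
  assume c: "0 < c"
  then have "0 \<le> c * x" using True by simp
  then show ?thesis using True by (simp add: pos_def)
next
  case False
  assume c: "0 < c"
  then have "c * x < 0" using False by (simp add: mult_pos_neg)
  then show ?thesis using False by (simp add: pos_def)
qed

lemma skew_mutB:
  assumes sk: "skew_symmetrizable n B" and k: "k < n"
  shows "skew_symmetrizable n (mutB d k B)"
proof -
  obtain D where D: "\<forall>i<n. D i > 0" "\<forall>i<n. \<forall>j<n. D i * B i j = - (D j * B j i)"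
    using sk unfolding skew_symmetrizable_def by blast
  have "\<forall>i<n. \<forall>j<n. D i * mutB d k B i j = - (D j * mutB d k B j i)"
  proof (intro allI impI)
    fix i j assume i: "i < n" and j: "j < n"
    have e1: "D i * B i j = - (D j * B j i)" using D(2) i j by blast
    show "D i * mutB d k B i j = - (D j * mutB d k B j i)"
    proof (cases "i = k \<or> j = k")
      case True then show ?thesis using e1 by (auto simp: mutB_def)
    next
      case False
      have e2: "D i * B i k = - (D k * B k i)" using D(2) i k by blast
      have e3: "D k * B k j = - (D j * B j k)" using D(2) j k by blast
      have pi: "D i > 0" "D j > 0" "D k > 0" using D(1) i j k by blast+
      have a: "D i * (pos (- B i k) * B k j) = - (D j * (pos (B k i) * B j k))"
      proof -
        have "D i * (pos (- B i k) * B k j) = pos (- (D i * B i k)) * B k j" using pos_scale[OF pi(1), of "- B i k"] by (simp add: algebra_simps)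
        also have "\<dots> = pos (D k * B k i) * B k j" using e2 by simp
        also have "\<dots> = pos (B k i) * (D k * B k j)" using pos_scale[OF pi(3), of "B k i"] by (simp add: algebra_simps)
        also have "\<dots> = - (D j * (pos (B k i) * B j k))" using e3 by (simp add: algebra_simps)
        finally show ?thesis .
      qed
      have b: "D i * (B i k * pos (B k j)) = - (D j * (B k i * pos (- B j k)))"
      proof -
        have "D i * (B i k * pos (B k j)) = (D i * B i k) * pos (B k j)" by (simp add: algebra_simps)
        also have "\<dots> = - (B k i * (D k * pos (B k j)))" using e2 by (simp add: algebra_simps)
        also have "D k * pos (B k j) = pos (D k * B k j)" using pos_scale[OF pi(3)] by simp
        also have "\<dots> = pos (- (D j * B j k))" using e3 by simp
        also have "\<dots> = D j * pos (- B j k)" using pos_scale[OF pi(2), of "- B j k"] by simp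
        finally show ?thesis by (simp add: algebra_simps)
      qed
      have c: "D i * (pos (- B i k) * B k j + B i k * pos (B k j)) = - (D j * (pos (- B j k) * B k i + B j k * pos (B k i)))"
        using a b by (simp add: algebra_simps)
      have m1: "D i * mutB d k B i j = D i * B i j + int (d k) * (D i * (pos (- B i k) * B k j + B i k * pos (B k j)))"
        using False by (simp add: mutB_def algebra_simps)
      have m2: "D j * mutB d k B j i = D j * B j i + int (d k) * (D j * (pos (- B j k) * B k i + B j k * pos (B k i)))"
        using False by (simp add: mutB_def algebra_simps)
      show ?thesis unfolding m1 m2 c e1 by (simp add: algebra_simps)
    qed
  qed
  then show ?thesis using D(1) unfolding skew_symmetrizable_def by blast
qed

lemma skew_diag: "skew_symmetrizable n B \<Longrightarrow> k < n \<Longrightarrow> B k k = 0"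
proof -
  assume "skew_symmetrizable n B" "k < n"
  then obtain D where "D k > 0" "D k * B k k = - (D k * B k k)" unfolding skew_symmetrizable_def by blast
  then show "B k k = 0" by simp
qed

lemma mutY_cong: "y i = y' i \<Longrightarrow> y k = y' k \<Longrightarrow> mutY S d z k B y i = mutY S d z k B y' i"
  by (simp add: mutY_def)

lemma path_ind:
  "set ks \<subseteq> {..<n} \<Longrightarrow> skew_symmetrizable n B \<Longrightarrow> positive_point q \<Longrightarrow> \<forall>j. 0 < X j q \<Longrightarrow>
   (\<forall>i a b. Y i (VZ a b) = 0) \<Longrightarrow> (\<forall>i<n. yr i = hat n d B Y X q i) \<Longrightarrow>
   (\<forall>j. 0 < snd (snd (ppat n d B Y X ks)) j q) \<and> (\<forall>i a b. fst (snd (ppat n d B Y X ks)) i (VZ a b) = 0) \<and>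
   (\<forall>i<n. hat n d (fst (ppat n d B Y X ks)) (fst (snd (ppat n d B Y X ks))) (snd (snd (ppat n d B Y X ks))) q i
      = snd (ypat rsf d (zq d q) B yr ks) i)"
proof (induction ks arbitrary: B Y X yr)
  case Nil then show ?case by simp
next
  case (Cons k ks)
  have k: "k < n" using Cons.prems by simp
  have Bkk: "B k k = 0" using skew_diag[OF Cons.prems(2) k] .
  have st: "(\<forall>j. 0 < mutX n d k B Y X j q) \<and>
    hat n d (mutB d k B) (mutY trop_sf d (zt d) k B Y) (mutX n d k B Y X) q i =
    mutY rsf d (zq d q) k B (hat n d B Y X q) i" if "i < n" for i
    using hat_step[where q=q and X=X and k=k and n=n and i=i and B=B and d=d and Y=Y] Cons.prems(3,4) k that Bkk by blast
  have yr': "\<forall>i<n. mutY rsf d (zq d q) k B yr i = hat n d (mutB d k B) (mutY trop_sf d (zt d) k B Y) (mutX n d k B Y X) q i"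
  proof (intro allI impI)
    fix i assume i: "i < n"
    have "mutY rsf d (zq d q) k B yr i = mutY rsf d (zq d q) k B (hat n d B Y X q) i"
      using Cons.prems(6) i k by (intro mutY_cong) auto
    then show "mutY rsf d (zq d q) k B yr i = hat n d (mutB d k B) (mutY trop_sf d (zt d) k B Y) (mutX n d k B Y X) q i"
      using st[OF i] by simp
  qed
  have "\<forall>i a b. mutY trop_sf d (zt d) k B Y i (VZ a b) = 0" using Cons.prems(5) by (auto intro: mutY_trop_VZ)
  then show ?case
    using Cons.IH[of "mutB d k B" "mutX n d k B Y X" "mutY trop_sf d (zt d) k B Y" "mutY rsf d (zq d q) k B yr"]
      Cons.prems skew_mutB[OF Cons.prems(2) k] st[OF k] yr' by simp
qed

lemma fst_ppat: "fst (ppat n d B Y X ks) = fold (mutB d) ks B"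
  by (induction ks arbitrary: B Y X) auto

lemma Yfun_rsf: "set ks \<subseteq> {..<n} \<Longrightarrow> i < n \<Longrightarrow> Yfun n d B ks i p = snd (ypat rsf d (zq d p) B (\<lambda>j. p (VY j)) ks) i"
  unfolding Yfun_def using shom_ypat[OF shom_pt[of p], where ks=ks and n=n and d=d and z="\<lambda>k s p. if s = 0 \<or> s = d k then 1 else p (zv d k s)" and z'="zq d p"
     and y="\<lambda>j p. p (VY j)" and y'="\<lambda>j. p (VY j)" and B=B]
  by (simp add: zq_def)

theorem part2:
  assumes tv: "set ks \<subseteq> {..<n}" and sk: "skew_symmetrizable n B" and i: "i < n" and p: "positive_point p"
  shows "Yfun n d B ks i p = (\<Prod>j<n. p (VY j) powi Cmat n d B ks j i) *
           (\<Prod>j<n. Fpoly n d B ks j p powi fold (mutB d) ks B j i)"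
proof -
  define p1 where "p1 = (\<lambda>v. case v of VX _ \<Rightarrow> 1 | _ \<Rightarrow> p v)"
  have p1: "positive_point p1" using p by (auto simp: positive_point_def p1_def split: var.split)
  define X0 where "X0 = (\<lambda>(j::nat) (p::var \<Rightarrow> real). p (VX j))"
  have X0: "\<forall>j. 0 < X0 j p1" by (simp add: X0_def p1_def)
  have yt0: "\<forall>i a b. yt0 i (VZ a b) = 0" by (simp add: yt0_def)
  have h0: "\<forall>i<n. p (VY i) = hat n d B yt0 X0 p1 i"
    by (auto simp: hat_def meval_yt0 X0_def p1_def)
  have zz: "zq d p = zq d p1" by (auto simp: zq_def p1_def zv_def fun_eq_iff)
  note R = path_ind[OF tv sk p1 X0 yt0 h0]
  define R where "R = ppat n d B yt0 X0 ks"
  have pr: "principal n d B ks = R" by (simp add: principal_def R_def X0_def)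
  have "Yfun n d B ks i p = hat n d (fst R) (fst (snd R)) (snd (snd R)) p1 i"
    using R i Yfun_rsf[OF tv i, of d B p] zz unfolding R_def by simp
  also have "\<dots> = meval n d (fst (snd R) i) p1 * (\<Prod>j<n. snd (snd R) j p1 powi fst R j i)"
    by (simp add: hat_def)
  also have "meval n d (fst (snd R) i) p1 = (\<Prod>j<n. p (VY j) powi Cmat n d B ks j i)"
    using R unfolding R_def[symmetric] by (subst meval_VY) (auto simp: Cmat_def pr p1_def)
  also have "(\<Prod>j<n. snd (snd R) j p1 powi fst R j i) = (\<Prod>j<n. Fpoly n d B ks j p powi fold (mutB d) ks B j i)"
    by (simp add: Fpoly_def pr p1_def R_def fst_ppat)
  finally show ?thesis .
qed


definition xone :: "(var \<Rightarrow> real) \<Rightarrow> (var \<Rightarrow> real)" where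
  "xone p = (\<lambda>v. case v of VX _ \<Rightarrow> 1 | _ \<Rightarrow> p v)"

definition repF :: "nat \<Rightarrow> (nat \<Rightarrow> nat) \<Rightarrow> ((var \<Rightarrow> real) \<Rightarrow> real) \<Rightarrow> bool" where
  "repF n d f \<longleftrightarrow> (\<exists>e. sfvars e \<subseteq> yzvars n d \<and> (\<forall>p. positive_point p \<longrightarrow> sfeval_real e p = f (xone p)))"

definition c1 :: "var sfexp" where "c1 = SDiv (SVar (VY 0)) (SVar (VY 0))"

lemma c1_real: "positive_point p \<Longrightarrow> sfeval_real c1 p = 1"
  by (simp add: c1_def positive_point_def less_imp_neq[symmetric])

lemma c1_vars: "0 < n \<Longrightarrow> sfvars c1 \<subseteq> yzvars n d"
  by (simp add: c1_def yzvars_def)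

lemma rep_const1: "0 < n \<Longrightarrow> repF n d (\<lambda>p. 1)"
  unfolding repF_def using c1_real c1_vars by blast

lemma rep_mul: "repF n d f \<Longrightarrow> repF n d g \<Longrightarrow> repF n d (\<lambda>p. f p * g p)"
  unfolding repF_def
proof -
  assume "\<exists>e. sfvars e \<subseteq> yzvars n d \<and> (\<forall>p. positive_point p \<longrightarrow> sfeval_real e p = f (xone p))"
    "\<exists>e. sfvars e \<subseteq> yzvars n d \<and> (\<forall>p. positive_point p \<longrightarrow> sfeval_real e p = g (xone p))"
  then obtain e1 e2 where "sfvars e1 \<subseteq> yzvars n d" "\<forall>p. positive_point p \<longrightarrow> sfeval_real e1 p = f (xone p)"
    "sfvars e2 \<subseteq> yzvars n d" "\<forall>p. positive_point p \<longrightarrow> sfeval_real e2 p = g (xone p)" by blast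
  then show "\<exists>e. sfvars e \<subseteq> yzvars n d \<and> (\<forall>p. positive_point p \<longrightarrow> sfeval_real e p = f (xone p) * g (xone p))"
    by (intro exI[of _ "SMul e1 e2"]) auto
qed

lemma rep_add: "repF n d f \<Longrightarrow> repF n d g \<Longrightarrow> repF n d (\<lambda>p. f p + g p)"
  unfolding repF_def
proof -
  assume "\<exists>e. sfvars e \<subseteq> yzvars n d \<and> (\<forall>p. positive_point p \<longrightarrow> sfeval_real e p = f (xone p))"
    "\<exists>e. sfvars e \<subseteq> yzvars n d \<and> (\<forall>p. positive_point p \<longrightarrow> sfeval_real e p = g (xone p))"
  then obtain e1 e2 where "sfvars e1 \<subseteq> yzvars n d" "\<forall>p. positive_point p \<longrightarrow> sfeval_real e1 p = f (xone p)"
    "sfvars e2 \<subseteq> yzvars n d" "\<forall>p. positive_point p \<longrightarrow> sfeval_real e2 p = g (xone p)" by blast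
  then show "\<exists>e. sfvars e \<subseteq> yzvars n d \<and> (\<forall>p. positive_point p \<longrightarrow> sfeval_real e p = f (xone p) + g (xone p))"
    by (intro exI[of _ "SAdd e1 e2"]) auto
qed

lemma rep_div: "repF n d f \<Longrightarrow> repF n d g \<Longrightarrow> repF n d (\<lambda>p. f p / g p)"
  unfolding repF_def
proof -
  assume "\<exists>e. sfvars e \<subseteq> yzvars n d \<and> (\<forall>p. positive_point p \<longrightarrow> sfeval_real e p = f (xone p))"
    "\<exists>e. sfvars e \<subseteq> yzvars n d \<and> (\<forall>p. positive_point p \<longrightarrow> sfeval_real e p = g (xone p))"
  then obtain e1 e2 where "sfvars e1 \<subseteq> yzvars n d" "\<forall>p. positive_point p \<longrightarrow> sfeval_real e1 p = f (xone p)"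
    "sfvars e2 \<subseteq> yzvars n d" "\<forall>p. positive_point p \<longrightarrow> sfeval_real e2 p = g (xone p)" by blast
  then show "\<exists>e. sfvars e \<subseteq> yzvars n d \<and> (\<forall>p. positive_point p \<longrightarrow> sfeval_real e p = f (xone p) / g (xone p))"
    by (intro exI[of _ "SDiv e1 e2"]) auto
qed

lemma rep_inv: "0 < n \<Longrightarrow> repF n d f \<Longrightarrow> repF n d (\<lambda>p. inverse (f p))"
  using rep_div[OF rep_const1, of n d f] by (simp add: inverse_eq_divide)

lemma rep_var: "v \<in> yzvars n d \<Longrightarrow> repF n d (\<lambda>p. p v)"
  unfolding repF_def by (intro exI[of _ "SVar v"]) (auto simp: xone_def yzvars_def)

lemma rep_X0: "0 < n \<Longrightarrow> repF n d (\<lambda>p. p (VX j))"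
  unfolding repF_def by (intro exI[of _ c1]) (auto simp: xone_def c1_real c1_vars)

lemma rep_pow: "0 < n \<Longrightarrow> repF n d f \<Longrightarrow> repF n d (\<lambda>p. f p ^ m)"
  by (induction m) (auto intro: rep_const1 rep_mul)

lemma rep_powi: "0 < n \<Longrightarrow> repF n d f \<Longrightarrow> repF n d (\<lambda>p. f p powi k)"
proof -
  assume n: "0 < n" and f: "repF n d f"
  have a: "repF n d (\<lambda>p. f p ^ nat k)" by (rule rep_pow[OF n f])
  have b: "repF n d (\<lambda>p. inverse (f p) ^ nat (-k))" by (rule rep_pow[OF n rep_inv[OF n f]])
  show ?thesis
  proof (cases "0 \<le> k")
    case True then show ?thesis using a by (simp add: power_int_def)
  next
    case False then show ?thesis using b by (simp add: power_int_def)
  qed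
qed

lemma rep_prod: assumes n: "0 < n" shows "finite A \<Longrightarrow> (\<forall>j\<in>A. repF n d (f j)) \<Longrightarrow> repF n d (\<lambda>p. \<Prod>j\<in>A. f j p)"
proof (induction A rule: finite_induct)
  case empty then show ?case by (simp add: rep_const1[OF n])
next
  case (insert x F)
  then show ?case using rep_mul[of n d "f x" "\<lambda>p. \<Prod>j\<in>F. f j p"] by simp
qed

lemma rep_sum: "(\<forall>s\<le>(D::nat). repF n d (f s)) \<Longrightarrow> repF n d (\<lambda>p. \<Sum>s=0..D. f s p)"
proof (induction D)
  case 0 then show ?case by simp
next
  case (Suc D)
  then show ?case using rep_add[of n d "\<lambda>p. \<Sum>s=0..D. f s p" "f (Suc D)"] by (simp add: sum.atLeast0_atMost_Suc)
qed

lemma rep_meval: "0 < n \<Longrightarrow> repF n d (meval n d m)"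
proof -
  assume n: "0 < n"
  have "repF n d (\<lambda>p. \<Prod>v\<in>yzvars n d. p v powi m v)"
    using n by (intro rep_prod finite_yzvars ballI rep_powi rep_var)
  then show ?thesis by (simp add: meval_def[abs_def])
qed

lemma rep_mutX:
  assumes n: "0 < n" and X: "\<forall>j. repF n d (X j)"
  shows "repF n d (mutX n d k B Y X j)"
proof (cases "j = k")
  case False then show ?thesis using X by (simp add: mutX_def)
next
  case True
  have yh: "repF n d (\<lambda>p. meval n d (Y k) p * (\<Prod>j<n. X j p powi B j k))"
    using n X by (intro rep_mul rep_meval rep_prod ballI rep_powi) auto
  have s: "repF n d (\<lambda>p. \<Sum>s=0..d k. meval n d (zt d k s) p * (meval n d (Y k) p * (\<Prod>j<n. X j p powi B j k)) ^ s)"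
    by (intro rep_sum allI impI rep_mul rep_meval[OF n] rep_pow[OF n yh])
  have m: "repF n d (\<lambda>p. (\<Prod>j<n. X j p ^ nat (pos (- B j k))) ^ d k)"
    using n X by (intro rep_pow rep_prod ballI) auto
  have "repF n d (\<lambda>p. inverse (X k p) * (\<Prod>j<n. X j p ^ nat (pos (- B j k))) ^ d k
      * (\<Sum>s=0..d k. meval n d (zt d k s) p * (meval n d (Y k) p * (\<Prod>j<n. X j p powi B j k)) ^ s)
      / meval n d (sf_sum trop_sf (\<lambda>s. sf_mul trop_sf (zt d k s) (sf_pow trop_sf (Y k) (int s))) (d k)) p)"
    using n X s m by (intro rep_div rep_mul rep_inv rep_meval) auto
  then show ?thesis using True by (simp add: mutX_def Let_def)
qed

lemma rep_path: "0 < n \<Longrightarrow> \<forall>j. repF n d (X j) \<Longrightarrow> \<forall>j. repF n d (snd (snd (ppat n d B Y X ks)) j)"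
proof (induction ks arbitrary: B Y X)
  case Nil then show ?case by simp
next
  case (Cons k ks)
  then show ?case using rep_mutX[OF Cons.prems(1)] by simp
qed

lemma F_exists: "0 < n \<Longrightarrow> \<exists>e. sfvars e \<subseteq> yzvars n d \<and> (\<forall>p. positive_point p \<longrightarrow> sfeval_real e p = Fpoly n d B ks j p)"
proof -
  assume n: "0 < n"
  have "\<forall>j. repF n d (snd (snd (principal n d B ks)) j)"
    unfolding principal_def using n by (intro rep_path) (auto intro: rep_X0)
  then show ?thesis unfolding repF_def Fpoly_def xone_def by blast
qed


definition esf :: "var sfexp semifield_ops" where
  "esf = \<lparr>sf_carrier = UNIV, sf_mul = SMul, sf_one = c1, sf_inv = SDiv c1, sf_add = SAdd\<rparr>"

lemma esf_simps[simp]: "sf_mul esf = SMul" "sf_one esf = c1" "sf_inv esf = SDiv c1" "sf_add esf = SAdd"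
  by (simp_all add: esf_def)

lemma (in sfl) sfeval_c: "sfvars e \<subseteq> V \<Longrightarrow> \<forall>v\<in>V. a v \<in> sf_carrier P \<Longrightarrow> sfeval P e a \<in> sf_carrier P"
  by (induction e) auto

lemma (in sfl) shom_esf_P:
  assumes n: "0 < n" and a: "\<forall>v\<in>yzvars n d. a v \<in> sf_carrier P"
  shows "shom esf P (\<lambda>e. sfeval P e a) {e. sfvars e \<subseteq> yzvars n d}"
proof -
  have v0: "VY 0 \<in> yzvars n d" using n by (simp add: yzvars_def)
  have c1P: "sfeval P c1 a = sf_one P" using a v0 by (simp add: c1_def)
  show ?thesis unfolding shom_def using c1_vars[OF n] c1P sfeval_c[OF _ a]
    by (auto simp: c1_def v0)
qed

lemma shom_esf_R:
  assumes n: "0 < n" and p: "positive_point p"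
  shows "shom esf rsf (\<lambda>e. sfeval_real e p) {e. sfvars e \<subseteq> yzvars n d}"
  unfolding shom_def using c1_vars[OF n] c1_real[OF p]
  by (auto simp: inverse_eq_divide simp del: sfeval_real.simps(4)) (auto simp: c1_def)


theorem mainTheorem17:
  fixes P :: "('p, 'm) semifield_ops_scheme"
    and n :: nat and d :: "nat \<Rightarrow> nat" and B :: "nat \<Rightarrow> nat \<Rightarrow> int"
    and y :: "nat \<Rightarrow> 'p" and z :: "nat \<Rightarrow> nat \<Rightarrow> 'p"
  assumes "semifield P"
    and "\<forall>i<n. 0 < d i"
    and "skew_symmetrizable n B"
    and "\<forall>j<n. y j \<in> sf_carrier P"
    and "\<forall>i<n. \<forall>s\<le>d i. z i s \<in> sf_carrier P"
    and "\<forall>i<n. z i 0 = sf_one P \<and> z i (d i) = sf_one P"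
    and "\<forall>i<n. \<forall>s\<le>d i. z i s = z i (d i - s)"
  shows "(\<forall>ks. tree_vertex n ks \<longrightarrow> (\<forall>i<n.
            snd (ypat P d z B y ks) i =
              sf_mul P (sf_prod P (\<lambda>j. sf_pow P (y j) (Cmat n d B ks j i)) n)
                (sf_prod P (\<lambda>j. sf_pow P
                    (eval_in P n d (Fpoly n d B ks j)
                       (\<lambda>v. case v of VY l \<Rightarrow> y l | VZ l s \<Rightarrow> z l s | VX _ \<Rightarrow> sf_one P))
                    (fst (ypat P d z B y ks) j i)) n)))
       \<and> (\<forall>ks. tree_vertex n ks \<longrightarrow> (\<forall>i<n. \<forall>p. positive_point p \<longrightarrow>
            Yfun n d B ks i p =
              (\<Prod>j<n. p (VY j) powi Cmat n d B ks j i)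
              * (\<Prod>j<n. Fpoly n d B ks j p powi fst (ypat P d z B y ks) j i)))"
proof -
  interpret sfl P by unfold_locales (rule assms(1))
  define a where "a = (\<lambda>v. case v of VY l \<Rightarrow> y l | VZ l s \<Rightarrow> z l s | VX _ \<Rightarrow> sf_one P)"
  have P1: "\<forall>i<n. snd (ypat P d z B y ks) i =
              sf_mul P (sf_prod P (\<lambda>j. sf_pow P (y j) (Cmat n d B ks j i)) n)
                (sf_prod P (\<lambda>j. sf_pow P (eval_in P n d (Fpoly n d B ks j) a)
                    (fst (ypat P d z B y ks) j i)) n)" if tv: "tree_vertex n ks" for ks
  proof (intro allI impI)
    fix i assume i: "i < n"
    have n: "0 < n" using i by simp
    have tvs: "set ks \<subseteq> {..<n}" using tv by (simp add: tree_vertex_def)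
    define G where "G = {e. sfvars e \<subseteq> yzvars n d}"
    have ac: "\<forall>v\<in>yzvars n d. a v \<in> sf_carrier P"
      using assms(4,5) by (auto simp: yzvars_def a_def)
    have hP: "shom esf P (\<lambda>e. sfeval P e a) G" unfolding G_def by (rule shom_esf_P[OF n ac])
    define zE where "zE k s = (if s = 0 \<or> s = d k then c1 else SVar (zv d k s))" for k s
    define yE where "yE j = SVar (VY j)" for j
    have zv_in: "zv d k s \<in> yzvars n d" if "k < n" "s \<le> d k" "\<not> (s = 0 \<or> s = d k)" for k s
      using that by (auto simp: zv_def yzvars_def)
    have zE_P: "\<forall>k<n. \<forall>s\<le>d k. zE k s \<in> G \<and> sfeval P (zE k s) a = z k s"
    proof (intro allI impI)
      fix k s assume k: "k < n" and s: "s \<le> d k"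
      show "zE k s \<in> G \<and> sfeval P (zE k s) a = z k s"
      proof (cases "s = 0 \<or> s = d k")
        case True
        have "sfeval P c1 a = sf_one P" using ac n by (simp add: c1_def yzvars_def)
        then show ?thesis using True c1_vars[OF n] assms(6) k by (auto simp: zE_def G_def)
      next
        case False
        have "z k (min s (d k - s)) = z k s"
        proof (cases "s \<le> d k - s")
          case True then show ?thesis by simp
        next
          case False
          have "z k s = z k (d k - s)" using assms(7) k s by blast
          then show ?thesis using False by (simp add: min_def)
        qed
        then show ?thesis using False zv_in[OF k s False] by (auto simp: zE_def G_def zv_def a_def)
      qed
    qed
    have yE_P: "\<forall>j<n. yE j \<in> G \<and> sfeval P (yE j) a = y j" by (auto simp: yE_def G_def a_def yzvars_def)
    define EY where "EY = snd (ypat esf d zE B yE ks) i"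
    have EY: "EY \<in> G \<and> sfeval P EY a = snd (ypat P d z B y ks) i"
      using shom_ypat[OF hP tvs zE_P yE_P] i by (simp add: EY_def)
    have EYr: "sfeval_real EY p = Yfun n d B ks i p" if p: "positive_point p" for p
    proof -
      have hR: "shom esf rsf (\<lambda>e. sfeval_real e p) G" unfolding G_def by (rule shom_esf_R[OF n p])
      have zr: "\<forall>k<n. \<forall>s\<le>d k. zE k s \<in> G \<and> sfeval_real (zE k s) p = zq d p k s"
        using zE_P c1_real[OF p] by (auto simp: zE_def zq_def)
      have yr: "\<forall>j<n. yE j \<in> G \<and> sfeval_real (yE j) p = p (VY j)" using yE_P by (simp add: yE_def)
      show ?thesis using shom_ypat[OF hR tvs zr yr] i Yfun_rsf[OF tvs i, of d B p] by (simp add: EY_def)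
    qed
    define e where "e j = (SOME e. sfvars e \<subseteq> yzvars n d \<and> (\<forall>p. positive_point p \<longrightarrow> sfeval_real e p = Fpoly n d B ks j p))" for j
    have e: "sfvars (e j) \<subseteq> yzvars n d \<and> (\<forall>p. positive_point p \<longrightarrow> sfeval_real (e j) p = Fpoly n d B ks j p)" for j
      unfolding e_def by (rule someI_ex[OF F_exists[OF n]])
    have eG: "e j \<in> G" for j using e by (simp add: G_def)
    have ev: "eval_in P n d (Fpoly n d B ks j) a = sfeval P (e j) a" for j by (simp add: eval_in_def e_def)
    define Bt where "Bt = fst (ypat P d z B y ks)"
    have Bt: "Bt = fold (mutB d) ks B" by (simp add: Bt_def fst_ypat)
    define f1 where "f1 j = sf_pow esf (yE j) (Cmat n d B ks j i)" for j
    define f2 where "f2 j = sf_pow esf (e j) (Bt j i)" for j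
    define ER where "ER = SMul (sf_prod esf f1 n) (sf_prod esf f2 n)"
    have f1G: "\<forall>j<n. f1 j \<in> G" using shom_pow[OF hP] yE_P by (simp add: f1_def)
    have f2G: "\<forall>j<n. f2 j \<in> G" using shom_pow[OF hP] eG by (simp add: f2_def)
    have ERG: "ER \<in> G" using shom_prod[OF hP f1G] shom_prod[OF hP f2G] by (simp add: ER_def G_def)
    have ERP: "sfeval P ER a = sf_mul P (sf_prod P (\<lambda>j. sf_pow P (y j) (Cmat n d B ks j i)) n)
                (sf_prod P (\<lambda>j. sf_pow P (eval_in P n d (Fpoly n d B ks j) a) (Bt j i)) n)"
    proof -
      have 1: "sfeval P (sf_prod esf f1 n) a = sf_prod P (\<lambda>j. sf_pow P (y j) (Cmat n d B ks j i)) n"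
        using shom_prod[OF hP f1G] shom_pow[OF hP] yE_P unfolding f1_def[abs_def] by (auto intro!: sf_prod_cong)
      have 2: "sfeval P (sf_prod esf f2 n) a = sf_prod P (\<lambda>j. sf_pow P (eval_in P n d (Fpoly n d B ks j) a) (Bt j i)) n"
        using shom_prod[OF hP f2G] shom_pow[OF hP eG] unfolding f2_def[abs_def] by (auto simp: ev intro!: sf_prod_cong)
      show ?thesis using 1 2 by (simp add: ER_def)
    qed
    have ERr: "sfeval_real ER p = Yfun n d B ks i p" if p: "positive_point p" for p
    proof -
      have hR: "shom esf rsf (\<lambda>e. sfeval_real e p) G" unfolding G_def by (rule shom_esf_R[OF n p])
      have 1: "sfeval_real (sf_prod esf f1 n) p = (\<Prod>j<n. p (VY j) powi Cmat n d B ks j i)"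
        using shom_prod[OF hR f1G] shom_pow[OF hR] yE_P unfolding f1_def[abs_def] by (auto simp: rsf_prod rsf_pow yE_def)
      have 2: "sfeval_real (sf_prod esf f2 n) p = (\<Prod>j<n. Fpoly n d B ks j p powi Bt j i)"
        using shom_prod[OF hR f2G] shom_pow[OF hR eG] e p unfolding f2_def[abs_def] by (auto simp: rsf_prod rsf_pow)
      show ?thesis using 1 2 part2[OF tvs assms(3) i p] Bt by (simp add: ER_def)
    qed
    obtain vl where vl: "distinct vl" "set vl = yzvars n d" using finite_distinct_list[OF finite_yzvars] by blast
    have "sfeval P EY a = sfeval P ER a"
    proof (rule universal[OF vl(1)])
      show "\<forall>v\<in>set vl. a v \<in> sf_carrier P" using ac vl by simp
      show "sfvars EY \<subseteq> set vl" using EY vl by (simp add: G_def)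
      show "sfvars ER \<subseteq> set vl" using ERG vl by (simp add: G_def)
      show "\<forall>p. (\<forall>v. 0 < p v) \<longrightarrow> sfeval_real EY p = sfeval_real ER p"
        using EYr ERr by (simp add: positive_point_def)
    qed
    then show "snd (ypat P d z B y ks) i =
              sf_mul P (sf_prod P (\<lambda>j. sf_pow P (y j) (Cmat n d B ks j i)) n)
                (sf_prod P (\<lambda>j. sf_pow P (eval_in P n d (Fpoly n d B ks j) a)
                    (fst (ypat P d z B y ks) j i)) n)"
      using EY ERP by (simp add: Bt_def)
  qed
  have P2: "Yfun n d B ks i p = (\<Prod>j<n. p (VY j) powi Cmat n d B ks j i)
              * (\<Prod>j<n. Fpoly n d B ks j p powi fst (ypat P d z B y ks) j i)"
    if "tree_vertex n ks" "i < n" "positive_point p" for ks i p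
    using part2[of ks n B i p d] that assms(3) by (simp add: tree_vertex_def fst_ypat)
  show ?thesis using P1 P2 unfolding a_def by blast
qed


end
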